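(* (1) If $L_1,L_2\in\mathbb{L}^{>0}(\mathrm{QBA}|\mathrm{ND})$ (over the same alphabet $\Sigma$), then $L_1\cup L_2\in\mathbb{L}^{>0}(\mathrm{QBA}|\mathrm{ND})$. (2) Let $\lambda\in(0,1)$. If $L_1,L_2\in\mathbb{L}^{>\lambda}(\mathrm{QBA}|\mathrm{ND})$ (over the same alphabet), then there is a sequence of $\omega$-languages $L^{(k)}\in\mathbb{L}^{>\lambda}(\mathrm{QBA}|\mathrm{ND})$, $k\in\mathbb{N}$, with $\lim_{k\to\infty}L^{(k)}=L_1\cup L_2$. (3) For $\lambda\in(0,1)$, $\mathbb{L}^{>\lambda}(\mathrm{QBA}|\mathrm{ND})$ is not closed in the limit: there is a sequence of languages in $\mathbb{L}^{>\lambda}(\mathrm{QBA}|\mathrm{ND})$ whose limit exists and does not belong to $\mathbb{L}^{>\lambda}(\mathrm{QBA}|\mathrm{ND})$. (4) For $\lambda\in[0,1)$, $\mathbb{L}^{>\lambda}(\mathrm{QBA}|\mathrm{ND})$ is not closed under complementation (relative to $\Sigma^\omega$). (5) For $\lambda\in[0,1)$, $\mathbb{L}^{>\lambda}(\mathrm{QBA}|\mathrm{ND})$ is not closed under intersection.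
   Context: A quantum automaton is a tuple $\mathcal{A}=(\mathcal{H},|s_0\rangle,\Sigma,\{U_\sigma:\sigma\in\Sigma\},F)$ where $\mathcal{H}$ is a finite-dimensional complex Hilbert space, $|s_0\rangle$ a unit vector, $\Sigma$ a finite alphabet, each $U_\sigma$ unitary, and $F$ a subspace. For $w=\sigma_1\sigma_2\cdots\in\Sigma^\omega$ the non-disturbing run is $|s_n\rangle=U_{\sigma_n}\cdots U_{\sigma_1}|s_0\rangle$, and $f^{\mathrm{ND}}_{\mathcal{A}}(w)=\sup_{|\psi\rangle}\sup_{\{n_i\}}\inf_{i\ge1}|\langle\psi|s_{n_i}\rangle|^2$ (sup over unit $|\psi\rangle\in F$ and strictly increasing sequences $0\le n_1<n_2<\cdots$). For $\lambda\in[0,1)$, $\mathcal{L}^{>\lambda}(\mathcal{A}|\mathrm{ND})=\{w\in\Sigma^\omega:f^{\mathrm{ND}}_{\mathcal{A}}(w)>\lambda\}$ and $\mathbb{L}^{>\lambda}(\mathrm{QBA}|\mathrm{ND})$ is the class of all such languages as $\mathcal{A}$ ranges over quantum automata. The limit of a sequence of sets $L^{(k)}$ is understood in the set-theoretic sense: $\lim_k L^{(k)}=L$ means $\liminf_k L^{(k)}=\limsup_k L^{(k)}=L$. *)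

theory Defs
  imports Complex_Main "Jordan_Normal_Form.Matrix"
begin

definition cinner :: "complex vec \<Rightarrow> complex vec \<Rightarrow> complex" where
  "cinner \<psi> s = (\<Sum>i<dim_vec s. cnj (\<psi> $ i) * s $ i)"

definition unit_vec_n :: "nat \<Rightarrow> complex vec \<Rightarrow> bool" where
  "unit_vec_n n v \<longleftrightarrow> v \<in> carrier_vec n \<and> cinner v v = 1"

definition adjoint_mat :: "complex mat \<Rightarrow> complex mat" where
  "adjoint_mat U = mat (dim_col U) (dim_row U) (\<lambda>(i,j). cnj (U $$ (j,i)))"

definition unitary_n :: "nat \<Rightarrow> complex mat \<Rightarrow> bool" where
  "unitary_n n U \<longleftrightarrow> U \<in> carrier_mat n n \<and> adjoint_mat U * U = 1\<^sub>m n"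

definition subspace_n :: "nat \<Rightarrow> complex vec set \<Rightarrow> bool" where
  "subspace_n n F \<longleftrightarrow> F \<subseteq> carrier_vec n \<and> 0\<^sub>v n \<in> F \<and>
     (\<forall>u\<in>F. \<forall>v\<in>F. u + v \<in> F) \<and> (\<forall>c::complex. \<forall>v\<in>F. c \<cdot>\<^sub>v v \<in> F)"

definition is_QA :: "'a set \<Rightarrow> nat \<Rightarrow> complex vec \<Rightarrow> ('a \<Rightarrow> complex mat) \<Rightarrow> complex vec set \<Rightarrow> bool" where
  "is_QA \<Sigma> n s0 U F \<longleftrightarrow> finite \<Sigma> \<and> unit_vec_n n s0 \<and> (\<forall>\<sigma>\<in>\<Sigma>. unitary_n n (U \<sigma>)) \<and> subspace_n n F"

text \<open>omega-words over Sigma: w 0 = sigma_1, w 1 = sigma_2, ...\<close>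
definition omega_words :: "'a set \<Rightarrow> (nat \<Rightarrow> 'a) set" where
  "omega_words \<Sigma> = {w. \<forall>i. w i \<in> \<Sigma>}"

primrec nd_run :: "complex vec \<Rightarrow> ('a \<Rightarrow> complex mat) \<Rightarrow> (nat \<Rightarrow> 'a) \<Rightarrow> nat \<Rightarrow> complex vec" where
  "nd_run s0 U w 0 = s0"
| "nd_run s0 U w (Suc k) = U (w k) *\<^sub>v nd_run s0 U w k"

text \<open>f^ND(w) = sup over unit psi in F and strictly increasing (n_i) of inf_i |<psi|s_{n_i}>|^2
  (sup of the empty set, i.e. F = {0}, taken to be 0).\<close>
definition f_ND :: "nat \<Rightarrow> complex vec \<Rightarrow> ('a \<Rightarrow> complex mat) \<Rightarrow> complex vec set \<Rightarrow> (nat \<Rightarrow> 'a) \<Rightarrow> real" where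
  "f_ND n s0 U F w =
     (let S = {(INF i. (cmod (cinner \<psi> (nd_run s0 U w (ns i))))\<^sup>2) | \<psi> (ns :: nat \<Rightarrow> nat).
                 \<psi> \<in> F \<and> unit_vec_n n \<psi> \<and> strict_mono ns}
      in if S = {} then 0 else Sup S)"

definition QBA_lang :: "'a set \<Rightarrow> nat \<Rightarrow> complex vec \<Rightarrow> ('a \<Rightarrow> complex mat) \<Rightarrow> complex vec set \<Rightarrow> real \<Rightarrow> (nat \<Rightarrow> 'a) set" where
  "QBA_lang \<Sigma> n s0 U F lam = {w \<in> omega_words \<Sigma>. f_ND n s0 U F w > lam}"

definition QBA_class :: "'a set \<Rightarrow> real \<Rightarrow> (nat \<Rightarrow> 'a) set set" where
  "QBA_class \<Sigma> lam = {L. \<exists>n s0 U F. is_QA \<Sigma> n s0 U F \<and> L = QBA_lang \<Sigma> n s0 U F lam}"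

definition set_liminf :: "(nat \<Rightarrow> 'b set) \<Rightarrow> 'b set" where
  "set_liminf L = (\<Union>k. \<Inter>j\<in>{k..}. L j)"

definition set_limsup :: "(nat \<Rightarrow> 'b set) \<Rightarrow> 'b set" where
  "set_limsup L = (\<Inter>k. \<Union>j\<in>{k..}. L j)"

definition set_lim_is :: "(nat \<Rightarrow> 'b set) \<Rightarrow> 'b set \<Rightarrow> bool" where
  "set_lim_is L X \<longleftrightarrow> set_liminf L = X \<and> set_limsup L = X"

end

theory Submission
  imports Defs "HOL-Analysis.L2_Norm" "HOL-Library.Infinite_Set"
begin

definition nrm :: "complex vec \<Rightarrow> real" where
  "nrm v = L2_set (\<lambda>i. cmod (v $ i)) {..<dim_vec v}"

lemma nrm_nonneg: "0 \<le> nrm v"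
  unfolding nrm_def by (rule L2_set_nonneg)

lemma nrm_sq: "(nrm v)^2 = (\<Sum>i<dim_vec v. (cmod (v $ i))^2)"
  unfolding nrm_def L2_set_def by (simp add: sum_nonneg)

lemma cinner_self: "cinner v v = complex_of_real ((nrm v)^2)"
  unfolding nrm_sq cinner_def of_real_sum
  by (rule sum.cong, simp, simp add: complex_norm_square[symmetric] mult.commute)

lemma cinner_self_real: "Re (cinner v v) = (nrm v)^2"
  by (simp add: cinner_self)

lemma cs: assumes "dim_vec u = dim_vec v"
  shows "cmod (cinner u v) \<le> nrm u * nrm v"
proof -
  have "cmod (cinner u v) \<le> (\<Sum>i<dim_vec v. cmod (cnj (u $ i) * v $ i))"
    unfolding cinner_def by (rule norm_sum)
  also have "\<dots> = (\<Sum>i<dim_vec v. \<bar>cmod (u $ i)\<bar> * \<bar>cmod (v $ i)\<bar>)"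
    by (simp add: norm_mult)
  also have "\<dots> \<le> L2_set (\<lambda>i. cmod (u $ i)) {..<dim_vec v} * L2_set (\<lambda>i. cmod (v $ i)) {..<dim_vec v}"
    by (rule L2_set_mult_ineq)
  finally show ?thesis unfolding nrm_def assms .
qed

lemma cinner_add_right: "dim_vec v = dim_vec w \<Longrightarrow> cinner u (v + w) = cinner u v + cinner u w"
  unfolding cinner_def by (simp add: sum.distrib algebra_simps)

lemma cinner_minus_right: "dim_vec v = dim_vec w \<Longrightarrow> cinner u (v - w) = cinner u v - cinner u w"
  unfolding cinner_def by (simp add: sum_subtractf algebra_simps)

lemma cinner_smult_right: "cinner u (c \<cdot>\<^sub>v v) = c * cinner u v"
  unfolding cinner_def by (simp add: sum_distrib_left algebra_simps)

lemma cinner_add_left: "dim_vec u = dim_vec w \<Longrightarrow> dim_vec v = dim_vec w \<Longrightarrow> cinner (u + v) w = cinner u w + cinner v w"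
  unfolding cinner_def by (simp add: sum.distrib algebra_simps)

lemma cinner_minus_left: "dim_vec u = dim_vec w \<Longrightarrow> dim_vec v = dim_vec w \<Longrightarrow> cinner (u - v) w = cinner u w - cinner v w"
  unfolding cinner_def by (simp add: sum_subtractf algebra_simps)

lemma cinner_smult_left: "dim_vec u = dim_vec v \<Longrightarrow> cinner (c \<cdot>\<^sub>v u) v = cnj c * cinner u v"
  unfolding cinner_def by (simp add: sum_distrib_left algebra_simps)

lemma cinner_swap: "dim_vec u = dim_vec v \<Longrightarrow> cinner v u = cnj (cinner u v)"
  unfolding cinner_def by (simp add: mult.commute)

lemma unitary_cinner:
  assumes U: "U \<in> carrier_mat n n" and A: "adjoint_mat U * U = 1\<^sub>m n"
    and v: "v \<in> carrier_vec n" and w: "w \<in> carrier_vec n"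
  shows "cinner (U *\<^sub>v v) (U *\<^sub>v w) = cinner v w"
proof -
  have E: "(\<Sum>i<n. cnj (U $$ (i,k)) * U $$ (i,l)) = (if k = l then 1 else 0)" if "k < n" "l < n" for k l
  proof -
    have "(adjoint_mat U * U) $$ (k,l) = (\<Sum>i<n. cnj (U $$ (i,k)) * U $$ (i,l))"
      using U that by (simp add: adjoint_mat_def scalar_prod_def atLeast0LessThan)
    then show ?thesis using A that by simp
  qed
  have "cinner (U *\<^sub>v v) (U *\<^sub>v w) = (\<Sum>i<n. cnj (\<Sum>k<n. U $$ (i,k) * v $ k) * (\<Sum>l<n. U $$ (i,l) * w $ l))"
    using U v w by (simp add: cinner_def scalar_prod_def atLeast0LessThan)
  also have "\<dots> = (\<Sum>i<n. \<Sum>l<n. \<Sum>k<n. cnj (v $ k) * w $ l * (cnj (U $$ (i,k)) * U $$ (i,l)))"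
    by (simp add: cnj_sum sum_product mult_ac)
  also have "\<dots> = (\<Sum>l<n. \<Sum>i<n. \<Sum>k<n. cnj (v $ k) * w $ l * (cnj (U $$ (i,k)) * U $$ (i,l)))"
    by (rule sum.swap)
  also have "\<dots> = (\<Sum>l<n. \<Sum>k<n. \<Sum>i<n. cnj (v $ k) * w $ l * (cnj (U $$ (i,k)) * U $$ (i,l)))"
    by (rule sum.cong[OF refl], rule sum.swap)
  also have "\<dots> = (\<Sum>k<n. \<Sum>l<n. \<Sum>i<n. cnj (v $ k) * w $ l * (cnj (U $$ (i,k)) * U $$ (i,l)))"
    by (rule sum.swap)
  also have "\<dots> = (\<Sum>k<n. \<Sum>l<n. cnj (v $ k) * w $ l * (if k = l then 1 else 0))"
    by (simp add: sum_distrib_left[symmetric] E)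
  also have "\<dots> = (\<Sum>k<n. cnj (v $ k) * w $ k)"
    by (simp add: if_distrib cong: if_cong)
  also have "\<dots> = cinner v w" using w by (simp add: cinner_def)
  finally show ?thesis .
qed

lemma nrm_eq_iff_sq: "nrm u = nrm v \<longleftrightarrow> (nrm u)^2 = (nrm v)^2"
  using nrm_nonneg[of u] nrm_nonneg[of v] by (simp add: power2_eq_iff_nonneg)

lemma unitary_nrm:
  assumes "U \<in> carrier_mat n n" "adjoint_mat U * U = 1\<^sub>m n" "v \<in> carrier_vec n"
  shows "nrm (U *\<^sub>v v) = nrm v"
  unfolding nrm_eq_iff_sq cinner_self_real[symmetric] using unitary_cinner[OF assms assms(3)] by simp

lemma nrm_zero_iff: "nrm v = 0 \<longleftrightarrow> v = 0\<^sub>v (dim_vec v)"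
proof
  assume "nrm v = 0"
  then have "\<forall>i\<in>{..<dim_vec v}. cmod (v $ i) = 0"
    unfolding nrm_def by (subst L2_set_eq_0_iff[symmetric]) auto
  then show "v = 0\<^sub>v (dim_vec v)" by (intro eq_vecI) auto
next
  assume "v = 0\<^sub>v (dim_vec v)"
  then show "nrm v = 0" unfolding nrm_def
    by (metis (no_types, lifting) L2_set_0' index_zero_vec(1) lessThan_iff norm_zero)
qed

lemma nrm_coord: "i < dim_vec v \<Longrightarrow> cmod (v $ i) \<le> nrm v"
  unfolding nrm_def by (rule member_le_L2_set) auto

lemma nrm_triangle:
  assumes "dim_vec u = dim_vec v" "dim_vec w = dim_vec v"
  shows "nrm (u - w) \<le> nrm (u - v) + nrm (v - w)"
proof -
  have "nrm (u - w) = L2_set (\<lambda>i. cmod (u $ i - w $ i)) {..<dim_vec v}"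
    unfolding nrm_def using assms by (intro L2_set_cong) auto
  also have "\<dots> \<le> L2_set (\<lambda>i. cmod (u $ i - v $ i) + cmod (v $ i - w $ i)) {..<dim_vec v}"
    by (rule L2_set_mono) (auto intro: norm_diff_triangle_le)
  also have "\<dots> \<le> L2_set (\<lambda>i. cmod (u $ i - v $ i)) {..<dim_vec v} + L2_set (\<lambda>i. cmod (v $ i - w $ i)) {..<dim_vec v}"
    by (rule L2_set_triangle_ineq)
  also have "\<dots> = nrm (u - v) + nrm (v - w)"
    unfolding nrm_def using assms by (intro arg_cong2[where f="(+)"] L2_set_cong) auto
  finally show ?thesis .
qed

lemma nrm_minus_commute: "dim_vec u = dim_vec v \<Longrightarrow> nrm (u - v) = nrm (v - u)"
  unfolding nrm_def by (intro L2_set_cong) (auto simp: norm_minus_commute)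

lemma nrm_smult: "nrm (c \<cdot>\<^sub>v v) = cmod c * nrm v"
proof -
  have "L2_set (\<lambda>i. cmod ((c \<cdot>\<^sub>v v) $ i)) {..<dim_vec v} = L2_set (\<lambda>i. cmod c * cmod (v $ i)) {..<dim_vec v}"
    by (rule L2_set_cong) (auto simp: norm_mult)
  then show ?thesis by (simp add: nrm_def L2_set_right_distrib)
qed

lemma cmod_sq_complex: "(complex_of_real (cmod z))^2 = z * cnj z"
  by (metis complex_norm_square of_real_power)

lemma run_props:
  assumes "is_QA \<Sigma> n s0 U F" "w \<in> omega_words \<Sigma>"
  shows "nd_run s0 U w k \<in> carrier_vec n \<and> nrm (nd_run s0 U w k) = 1"
proof (induction k)
  case 0
  have "s0 \<in> carrier_vec n" "cinner s0 s0 = 1" using assms(1) unfolding is_QA_def unit_vec_n_def by auto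
  then show ?case using cinner_self_real[of s0] nrm_nonneg[of s0] by (simp add: power2_eq_1_iff)
next
  case (Suc k)
  have "unitary_n n (U (w k))" using assms unfolding is_QA_def omega_words_def by auto
  then show ?case using Suc unitary_nrm[of "U (w k)" n] unfolding unitary_n_def by auto
qed

definition onf :: "nat \<Rightarrow> (nat \<Rightarrow> complex vec) \<Rightarrow> nat \<Rightarrow> bool" where
  "onf n b m \<longleftrightarrow> (\<forall>j<m. b j \<in> carrier_vec n) \<and> (\<forall>j<m. \<forall>k<m. cinner (b j) (b k) = (if j = k then 1 else 0))"

definition lincomb_b :: "nat \<Rightarrow> (nat \<Rightarrow> complex vec) \<Rightarrow> nat \<Rightarrow> (nat \<Rightarrow> complex) \<Rightarrow> complex vec" where
  "lincomb_b n b m c = vec n (\<lambda>i. \<Sum>j<m. c j * b j $ i)"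

definition projb :: "nat \<Rightarrow> (nat \<Rightarrow> complex vec) \<Rightarrow> nat \<Rightarrow> complex vec \<Rightarrow> complex vec" where
  "projb n b m v = lincomb_b n b m (\<lambda>j. cinner (b j) v)"

definition spanF :: "nat \<Rightarrow> (nat \<Rightarrow> complex vec) \<Rightarrow> nat \<Rightarrow> complex vec set" where
  "spanF n b m = {v \<in> carrier_vec n. projb n b m v = v}"

definition Qf :: "(nat \<Rightarrow> complex vec) \<Rightarrow> nat \<Rightarrow> complex vec \<Rightarrow> real" where
  "Qf b m s = (\<Sum>j<m. (cmod (cinner (b j) s))^2)"

lemma Qf_nonneg: "0 \<le> Qf b m s" unfolding Qf_def by (simp add: sum_nonneg)

lemma lincomb_carrier[simp]: "lincomb_b n b m c \<in> carrier_vec n"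
  unfolding lincomb_b_def by simp

lemma lincomb_dim[simp]: "dim_vec (lincomb_b n b m c) = n"
  unfolding lincomb_b_def by simp

lemma cinner_lincomb_right:
  assumes "\<forall>j<m. b j \<in> carrier_vec n"
  shows "cinner u (lincomb_b n b m c) = (\<Sum>j<m. c j * cinner u (b j))"
proof -
  have "cinner u (lincomb_b n b m c) = (\<Sum>i<n. \<Sum>j<m. cnj (u $ i) * (c j * b j $ i))"
    unfolding cinner_def lincomb_b_def by (simp add: sum_distrib_left)
  also have "\<dots> = (\<Sum>j<m. \<Sum>i<n. cnj (u $ i) * (c j * b j $ i))" by (rule sum.swap)
  also have "\<dots> = (\<Sum>j<m. c j * cinner u (b j))"
    using assms unfolding cinner_def by (intro sum.cong refl) (auto simp: sum_distrib_left mult_ac)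
  finally show ?thesis .
qed

lemma cinner_lincomb_left:
  assumes "\<forall>j<m. b j \<in> carrier_vec n" "u \<in> carrier_vec n"
  shows "cinner (lincomb_b n b m c) u = (\<Sum>j<m. cnj (c j) * cinner (b j) u)"
proof -
  have "cinner (lincomb_b n b m c) u = (\<Sum>i<n. \<Sum>j<m. cnj (c j) * cnj (b j $ i) * u $ i)"
    using assms unfolding cinner_def lincomb_b_def by (simp add: sum_distrib_right)
  also have "\<dots> = (\<Sum>j<m. \<Sum>i<n. cnj (c j) * cnj (b j $ i) * u $ i)" by (rule sum.swap)
  also have "\<dots> = (\<Sum>j<m. cnj (c j) * cinner (b j) u)"
    using assms unfolding cinner_def by (intro sum.cong refl) (auto simp: sum_distrib_left mult_ac)
  finally show ?thesis .
qed

lemma onf_carrier: "onf n b m \<Longrightarrow> j < m \<Longrightarrow> b j \<in> carrier_vec n"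
  unfolding onf_def by auto

lemma cinner_b_lincomb:
  assumes "onf n b m" "j < m"
  shows "cinner (b j) (lincomb_b n b m c) = c j"
proof -
  have "cinner (b j) (lincomb_b n b m c) = (\<Sum>k<m. c k * (if j = k then 1 else 0))"
    using assms unfolding onf_def by (subst cinner_lincomb_right) auto
  also have "\<dots> = c j" using assms(2) by (simp add: if_distrib cong: if_cong)
  finally show ?thesis .
qed

lemma cinner_lincomb_self:
  assumes "onf n b m"
  shows "cinner (lincomb_b n b m c) (lincomb_b n b m c) = (\<Sum>j<m. cnj (c j) * c j)"
  using assms by (subst cinner_lincomb_left) (auto simp: onf_def cinner_b_lincomb)

lemma nrm_lincomb_sq:
  assumes "onf n b m"
  shows "(nrm (lincomb_b n b m c))^2 = (\<Sum>j<m. (cmod (c j))^2)"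
proof -
  have "complex_of_real ((nrm (lincomb_b n b m c))^2) = (\<Sum>j<m. cnj (c j) * c j)"
    using cinner_lincomb_self[OF assms] cinner_self by metis
  also have "\<dots> = complex_of_real (\<Sum>j<m. (cmod (c j))^2)"
    by (simp add: cmod_sq_complex mult.commute)
  finally show ?thesis using of_real_eq_iff by blast
qed

lemma projb_add:
  assumes "onf n b m" "u \<in> carrier_vec n" "v \<in> carrier_vec n"
  shows "projb n b m (u + v) = projb n b m u + projb n b m v"
  using assms unfolding projb_def lincomb_b_def onf_def
  by (intro eq_vecI) (auto simp: cinner_add_right sum.distrib algebra_simps)

lemma projb_smult:
  shows "projb n b m (c \<cdot>\<^sub>v v) = c \<cdot>\<^sub>v projb n b m v"
  unfolding projb_def lincomb_b_def
  by (intro eq_vecI) (auto simp: cinner_smult_right sum_distrib_left algebra_simps)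

lemma projb_zero: "projb n b m (0\<^sub>v n) = 0\<^sub>v n"
  unfolding projb_def lincomb_b_def cinner_def by (intro eq_vecI) auto

lemma spanF_subspace:
  assumes "onf n b m" shows "subspace_n n (spanF n b m)"
  unfolding subspace_n_def spanF_def using assms
  by (auto simp: projb_add projb_smult projb_zero)

lemma lincomb_cong: "(\<And>j. j < m \<Longrightarrow> c j = d j) \<Longrightarrow> lincomb_b n b m c = lincomb_b n b m d"
  unfolding lincomb_b_def by (intro eq_vecI) auto

lemma lincomb_in_spanF:
  assumes "onf n b m" shows "lincomb_b n b m c \<in> spanF n b m"
proof -
  have "projb n b m (lincomb_b n b m c) = lincomb_b n b m c"
    unfolding projb_def using assms
    by (intro lincomb_cong) (simp add: cinner_b_lincomb)
  then show ?thesis unfolding spanF_def by simp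
qed

lemma bessel:
  assumes "onf n b m" "v \<in> carrier_vec n"
  shows "Qf b m v \<le> (nrm v)^2"
proof -
  define p where "p = projb n b m v"
  define c where "c = (\<lambda>j. cinner (b j) v)"
  have bc: "\<forall>j<m. b j \<in> carrier_vec n" using assms unfolding onf_def by auto
  have p: "p = lincomb_b n b m c" unfolding p_def projb_def c_def ..
  have pc: "p \<in> carrier_vec n" unfolding p by simp
  have Q: "complex_of_real (Qf b m v) = (\<Sum>j<m. cnj (c j) * c j)"
    unfolding Qf_def c_def by (simp add: cmod_sq_complex mult.commute)
  have vp: "cinner v p = (\<Sum>j<m. cnj (c j) * c j)"
    unfolding p using bc assms(2)
    by (subst cinner_lincomb_right) (auto simp: c_def mult.commute intro!: sum.cong cinner_swap)
  have pv: "cinner p v = (\<Sum>j<m. cnj (c j) * c j)"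
    unfolding p using bc assms(2) by (subst cinner_lincomb_left) (auto simp: c_def)
  have pp: "cinner p p = (\<Sum>j<m. cnj (c j) * c j)"
    unfolding p by (rule cinner_lincomb_self[OF assms(1)])
  have "cinner (v - p) (v - p) = cinner v (v - p) - cinner p (v - p)"
    using pc assms(2) by (subst cinner_minus_left) auto
  also have "\<dots> = cinner v v - complex_of_real (Qf b m v)"
    using pc assms(2) by (simp add: cinner_minus_right vp pv pp Q)
  finally have "complex_of_real ((nrm (v - p))^2) = complex_of_real ((nrm v)^2 - Qf b m v)"
    by (simp add: cinner_self)
  then have "(nrm (v - p))^2 = (nrm v)^2 - Qf b m v" using of_real_eq_iff by blast
  then show ?thesis by (metis diff_ge_0_iff_ge zero_le_power2)
qed

lemma spanF_lincomb:
  assumes "v \<in> spanF n b m" shows "v = lincomb_b n b m (\<lambda>j. cinner (b j) v)"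
  using assms unfolding spanF_def projb_def by auto

lemma cs_span:
  assumes "onf n b m" "\<psi> \<in> spanF n b m" "nrm \<psi> = 1" "s \<in> carrier_vec n"
  shows "(cmod (cinner \<psi> s))^2 \<le> Qf b m s"
proof -
  define c where "c = (\<lambda>j. cinner (b j) \<psi>)"
  have bc: "\<forall>j<m. b j \<in> carrier_vec n" using assms unfolding onf_def by auto
  have psi: "\<psi> = lincomb_b n b m c" unfolding c_def by (rule spanF_lincomb[OF assms(2)])
  have "cinner \<psi> s = (\<Sum>j<m. cnj (c j) * cinner (b j) s)"
    using bc assms(4) by (subst psi, subst cinner_lincomb_left) auto
  then have "cmod (cinner \<psi> s) \<le> (\<Sum>j<m. \<bar>cmod (c j)\<bar> * \<bar>cmod (cinner (b j) s)\<bar>)"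
    by (auto intro: order_trans[OF norm_sum] simp: norm_mult)
  also have "\<dots> \<le> L2_set (\<lambda>j. cmod (c j)) {..<m} * L2_set (\<lambda>j. cmod (cinner (b j) s)) {..<m}"
    by (rule L2_set_mult_ineq)
  also have "L2_set (\<lambda>j. cmod (c j)) {..<m} = 1"
  proof -
    have "(nrm \<psi>)^2 = (\<Sum>j<m. (cmod (c j))^2)" by (subst psi, rule nrm_lincomb_sq[OF assms(1)])
    then show ?thesis using assms(3) unfolding L2_set_def by simp
  qed
  also have "L2_set (\<lambda>j. cmod (cinner (b j) s)) {..<m} = sqrt (Qf b m s)"
    unfolding L2_set_def Qf_def ..
  finally have "cmod (cinner \<psi> s) \<le> sqrt (Qf b m s)" by simp
  then have "(cmod (cinner \<psi> s))^2 \<le> (sqrt (Qf b m s))^2"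
    by (intro power_mono) auto
  then show ?thesis using Qf_nonneg by simp
qed

lemma onf_le:
  assumes "onf n b m" shows "m \<le> n"
proof -
  have bc: "\<forall>j<m. b j \<in> carrier_vec n" using assms unfolding onf_def by auto
  have "real m = (\<Sum>j<m. (nrm (b j))^2)"
  proof -
    have "(nrm (b j))^2 = 1" if "j < m" for j
      using assms that cinner_self_real[of "b j"] unfolding onf_def by auto
    then show ?thesis by simp
  qed
  also have "\<dots> = (\<Sum>j<m. \<Sum>i<n. (cmod (b j $ i))^2)"
    using bc by (intro sum.cong refl) (auto simp: nrm_sq)
  also have "\<dots> = (\<Sum>i<n. \<Sum>j<m. (cmod (b j $ i))^2)" by (rule sum.swap)
  also have "\<dots> = (\<Sum>i<n. Qf b m (unit_vec n i))"
  proof (intro sum.cong refl)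
    fix i assume i: "i \<in> {..<n}"
    have "cinner (b j) (unit_vec n i) = cnj (b j $ i)" if "j < m" for j
      unfolding cinner_def using i by (simp add: unit_vec_def if_distrib cong: if_cong)
    then show "(\<Sum>j<m. (cmod (b j $ i))^2) = Qf b m (unit_vec n i)"
      unfolding Qf_def by simp
  qed
  also have "\<dots> \<le> (\<Sum>i<n. (nrm (unit_vec n i))^2)"
    by (intro sum_mono bessel[OF assms]) auto
  also have "\<dots> = (\<Sum>i<n. 1)"
  proof (intro sum.cong refl)
    fix i assume i: "i \<in> {..<n}"
    have "cinner (unit_vec n i) (unit_vec n i) = 1"
      unfolding cinner_def using i by (simp add: unit_vec_def if_distrib cong: if_cong)
    then show "(nrm (unit_vec n i))^2 = 1" using cinner_self_real by (metis one_complex.sel(1))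
  qed
  finally show ?thesis by simp
qed

lemma lincomb_in_F:
  assumes F: "subspace_n n F" and bF: "\<forall>j<m. b j \<in> F"
  shows "lincomb_b n b m c \<in> F"
  using bF
proof (induction m)
  case 0
  have "lincomb_b n b 0 c = 0\<^sub>v n" unfolding lincomb_b_def by (intro eq_vecI) auto
  then show ?case using F unfolding subspace_n_def by auto
next
  case (Suc m)
  have bm: "b m \<in> carrier_vec n" using Suc.prems F unfolding subspace_n_def by auto
  have "lincomb_b n b (Suc m) c = lincomb_b n b m c + c m \<cdot>\<^sub>v b m"
    using bm by (intro eq_vecI) (auto simp: lincomb_b_def)
  moreover have "lincomb_b n b m c \<in> F" using Suc by auto
  moreover have "c m \<cdot>\<^sub>v b m \<in> F" using Suc.prems F unfolding subspace_n_def by auto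
  ultimately show ?case using F unfolding subspace_n_def by auto
qed

lemma basis_exists:
  assumes F: "subspace_n n F"
  shows "\<exists>b m. onf n b m \<and> F = spanF n b m"
proof -
  define M where "M = {m. \<exists>b. onf n b m \<and> (\<forall>j<m. b j \<in> F)}"
  have M0: "0 \<in> M" unfolding M_def onf_def by auto
  have "M \<subseteq> {..n}" using onf_le unfolding M_def by auto
  hence fin: "finite M" by (rule finite_subset) auto
  define m where "m = Max M"
  have "m \<in> M" using fin M0 unfolding m_def by (intro Max_in) auto
  then obtain b where b: "onf n b m" "\<forall>j<m. b j \<in> F" unfolding M_def by auto
  have notM: "Suc m \<notin> M"
  proof
    assume "Suc m \<in> M"
    then have "Suc m \<le> m" unfolding m_def using Max_ge[OF fin] by blast
    then show False by simp
  qed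
  have Fc: "F \<subseteq> carrier_vec n" using F unfolding subspace_n_def by auto
  show ?thesis
  proof (intro exI conjI)
    show "onf n b m" by fact
    show "F = spanF n b m"
    proof
      show "spanF n b m \<subseteq> F"
      proof
        fix v assume "v \<in> spanF n b m"
        then have "v = lincomb_b n b m (\<lambda>j. cinner (b j) v)" by (rule spanF_lincomb)
        then show "v \<in> F" using lincomb_in_F[OF F b(2)] by metis
      qed
      show "F \<subseteq> spanF n b m"
      proof
        fix v assume v: "v \<in> F"
        define p where "p = projb n b m v"
        have pF: "p \<in> F" unfolding p_def projb_def by (rule lincomb_in_F[OF F b(2)])
        define r where "r = v + (-1) \<cdot>\<^sub>v p"
        have rF: "r \<in> F" using F v pF unfolding r_def subspace_n_def by auto
        have vc: "v \<in> carrier_vec n" using v Fc by auto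
        have pc: "p \<in> carrier_vec n" unfolding p_def projb_def by simp
        have r_eq: "r = v - p" unfolding r_def using vc pc by (intro eq_vecI) auto
        have orth: "cinner (b j) r = 0" if "j < m" for j
        proof -
          have "cinner (b j) r = cinner (b j) v - cinner (b j) p"
            unfolding r_eq using vc pc by (simp add: cinner_minus_right)
          also have "cinner (b j) p = cinner (b j) v"
            unfolding p_def projb_def using b(1) that by (simp add: cinner_b_lincomb)
          finally show ?thesis by simp
        qed
        have r0: "r = 0\<^sub>v n"
        proof (rule ccontr)
          assume rne: "r \<noteq> 0\<^sub>v n"
          have rc: "r \<in> carrier_vec n" using rF Fc by auto
          have nr: "nrm r \<noteq> 0" using nrm_zero_iff[of r] rne rc by auto
          hence nrpos: "nrm r > 0" using nrm_nonneg[of r] by simp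
          define u where "u = complex_of_real (1 / nrm r) \<cdot>\<^sub>v r"
          define b' where "b' = b(m := u)"
          have uF: "u \<in> F" using F rF unfolding u_def subspace_n_def by auto
          have uc: "u \<in> carrier_vec n" using uF Fc by auto
          have "cinner u u = cnj (complex_of_real (1 / nrm r)) * (complex_of_real (1 / nrm r) * cinner r r)"
            unfolding u_def using rc by (simp add: cinner_smult_left cinner_smult_right)
          also have "\<dots> = complex_of_real ((1 / nrm r) * (1 / nrm r) * (nrm r)^2)"
            unfolding cinner_self by simp
          also have "(1 / nrm r) * (1 / nrm r) * (nrm r)^2 = 1" using nrpos by (simp add: power2_eq_square)
          finally have uu: "cinner u u = 1" by simp
          have bu: "cinner (b j) u = 0" if "j<m" for j
            unfolding u_def by (simp add: cinner_smult_right orth that)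
          have ub: "cinner u (b j) = 0" if "j<m" for j
            using cinner_swap[of "b j" u] bu[OF that] onf_carrier[OF b(1) that] uc by auto
          have "onf n b' (Suc m)" unfolding onf_def
          proof (intro conjI allI impI)
            fix j assume "j < Suc m"
            then show "b' j \<in> carrier_vec n" using onf_carrier[OF b(1)] uc
              by (cases "j = m") (auto simp: b'_def)
          next
            fix j k assume j: "j < Suc m" and k: "k < Suc m"
            show "cinner (b' j) (b' k) = (if j = k then 1 else 0)"
            proof (cases "j = m")
              case True then show ?thesis using uu ub k by (cases "k = m") (auto simp: b'_def)
            next
              case False then have "j < m" using j by simp
              then show ?thesis using bu b(1) k unfolding onf_def by (cases "k = m") (auto simp: b'_def)
            qed
          qed
          moreover have "\<forall>j<Suc m. b' j \<in> F" using b(2) uF unfolding b'_def by (auto simp: less_Suc_eq)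
          ultimately have "Suc m \<in> M" unfolding M_def by blast
          with notM show False by simp
        qed
        have "v = p"
        proof (rule eq_vecI)
          fix i assume "i < dim_vec p"
          then have "r $ i = 0" "i < n" using r0 pc by auto
          then show "v $ i = p $ i" using r_eq vc pc by auto
        next
          show "dim_vec v = dim_vec p" using vc pc by auto
        qed
        then show "v \<in> spanF n b m" unfolding spanF_def p_def using vc by auto
      qed
    qed
  qed
qed

lemma bw_real:
  fixes X :: "nat \<Rightarrow> nat \<Rightarrow> real"
  assumes "\<And>i j. \<bar>X i j\<bar> \<le> B"
  shows "\<exists>r::nat\<Rightarrow>nat. strict_mono r \<and> (\<forall>j<m. convergent (\<lambda>i. X (r i) j))"
proof (induction m)
  case 0 show ?case by (rule exI[of _ id]) (simp add: strict_mono_def)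
next
  case (Suc m)
  then obtain r :: "nat \<Rightarrow> nat" where r: "strict_mono r" "\<forall>j<m. convergent (\<lambda>i. X (r i) j)" by auto
  obtain r' :: "nat \<Rightarrow> nat" where r': "strict_mono r'" "monoseq (\<lambda>i. X (r (r' i)) m)" using seq_monosub[of "\<lambda>i. X (r i) m"] by blast
  have "Bseq (\<lambda>i. X (r (r' i)) m)" using assms by (intro BseqI'[of _ B]) auto
  hence conv: "convergent (\<lambda>i. X (r (r' i)) m)" using r' Bseq_monoseq_convergent by blast
  show ?case
  proof (intro exI conjI allI impI)
    show "strict_mono (r \<circ> r')" using r r' strict_mono_o by blast
    fix j assume "j < Suc m"
    show "convergent (\<lambda>i. X ((r \<circ> r') i) j)"
    proof (cases "j = m")
      case True then show ?thesis using conv by simp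
    next
      case False then have "j<m" using \<open>j<Suc m\<close> by simp
      then obtain l where "(\<lambda>i. X (r i) j) \<longlonglongrightarrow> l" using r unfolding convergent_def by auto
      then have "((\<lambda>i. X (r i) j) \<circ> r') \<longlonglongrightarrow> l" using LIMSEQ_subseq_LIMSEQ r' by blast
      then show ?thesis unfolding convergent_def o_def by auto
    qed
  qed
qed

lemma bw_complex:
  fixes X :: "nat \<Rightarrow> nat \<Rightarrow> complex"
  assumes "\<And>i j. cmod (X i j) \<le> B"
  shows "\<exists>(r::nat\<Rightarrow>nat) L. strict_mono r \<and> (\<forall>j<m. (\<lambda>i. X (r i) j) \<longlonglongrightarrow> L j)"
proof -
  define Y where "Y = (\<lambda>i j. if even j then Re (X i (j div 2)) else Im (X i (j div 2)))"
  have "\<bar>Y i j\<bar> \<le> B" for i j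
    unfolding Y_def by (auto intro: order_trans[OF abs_Re_le_cmod] order_trans[OF abs_Im_le_cmod] assms)
  then obtain r :: "nat \<Rightarrow> nat" where r: "strict_mono r" "\<forall>j<2*m. convergent (\<lambda>i. Y (r i) j)"
    using bw_real by blast
  have "\<exists>l. (\<lambda>i. X (r i) j) \<longlonglongrightarrow> l" if j: "j < m" for j
  proof -
    have "convergent (\<lambda>i. Y (r i) (2*j))" "convergent (\<lambda>i. Y (r i) (2*j+1))" using r(2) j by auto
    then have c1: "convergent (\<lambda>i. Re (X (r i) j))" and c2: "convergent (\<lambda>i. Im (X (r i) j))"
      unfolding Y_def by auto
    then obtain a b where a: "(\<lambda>i. Re (X (r i) j)) \<longlonglongrightarrow> a" and b: "(\<lambda>i. Im (X (r i) j)) \<longlonglongrightarrow> b"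
      unfolding convergent_def by auto
    have "(\<lambda>i. X (r i) j) \<longlonglongrightarrow> Complex a b"
      unfolding tendsto_complex_iff using a b by simp
    then show ?thesis by blast
  qed
  then obtain L where "\<forall>j<m. (\<lambda>i. X (r i) j) \<longlonglongrightarrow> L j" by metis
  then show ?thesis using r(1) by blast
qed

definition crit :: "(nat \<Rightarrow> real) \<Rightarrow> real \<Rightarrow> bool" where
  "crit a lam \<longleftrightarrow> (\<exists>\<epsilon>>0. infinite {k. a k > lam + \<epsilon>})"

lemma unit_vec_n_iff: "unit_vec_n n \<psi> \<longleftrightarrow> \<psi> \<in> carrier_vec n \<and> nrm \<psi> = 1"
proof -
  have "cinner \<psi> \<psi> = 1 \<longleftrightarrow> (nrm \<psi>)^2 = 1"
    unfolding cinner_self by (metis of_real_1 of_real_eq_iff)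
  also have "\<dots> \<longleftrightarrow> nrm \<psi> = 1" using nrm_nonneg[of \<psi>] by (simp add: power2_eq_1_iff)
  finally show ?thesis unfolding unit_vec_n_def by simp
qed

lemma strict_mono_range_infinite: "strict_mono (ns :: nat \<Rightarrow> nat) \<Longrightarrow> infinite (range ns)"
  by (rule range_inj_infinite) (simp add: inj_on_def strict_mono_eq)

lemma CL:
  assumes qa: "is_QA \<Sigma> n s0 U F" and w: "w \<in> omega_words \<Sigma>" and b: "onf n b m"
    and F: "F = spanF n b m" and lam: "0 \<le> lam"
  shows "f_ND n s0 U F w > lam \<longleftrightarrow> crit (\<lambda>k. Qf b m (nd_run s0 U w k)) lam"
proof -
  define s where "s = nd_run s0 U w"
  have sc: "s k \<in> carrier_vec n" and s1: "nrm (s k) = 1" for k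
    using run_props[OF qa w] unfolding s_def by auto
  define S where "S = {(INF i. (cmod (cinner \<psi> (s (ns i))))\<^sup>2) | \<psi> (ns :: nat \<Rightarrow> nat).
                 \<psi> \<in> F \<and> unit_vec_n n \<psi> \<and> strict_mono ns}"
  have fdef: "f_ND n s0 U F w = (if S = {} then 0 else Sup S)"
    unfolding f_ND_def S_def s_def Let_def by simp
  have g1: "(cmod (cinner \<psi> (s k)))^2 \<le> 1" if "unit_vec_n n \<psi>" for \<psi> k
  proof -
    have "cmod (cinner \<psi> (s k)) \<le> nrm \<psi> * nrm (s k)"
      using that sc[of k] by (intro cs) (auto simp: unit_vec_n_iff)
    then have "cmod (cinner \<psi> (s k)) \<le> 1" using that s1 by (simp add: unit_vec_n_iff)
    then show ?thesis by (simp add: power_le_one)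
  qed
  have Sbd: "x \<le> 1" if "x \<in> S" for x
  proof -
    from that obtain \<psi> and ns :: "nat \<Rightarrow> nat" where x: "x = (INF i. (cmod (cinner \<psi> (s (ns i))))\<^sup>2)" and
      u: "unit_vec_n n \<psi>" unfolding S_def by blast
    have "x \<le> (cmod (cinner \<psi> (s (ns 0))))\<^sup>2" unfolding x
      by (rule cINF_lower) (auto intro!: bdd_belowI[of _ 0])
    then show ?thesis using g1[OF u, of "ns 0"] by linarith
  qed
  have bddS: "bdd_above S" using Sbd by (intro bdd_aboveI) auto
  show ?thesis
  proof
    assume flam: "f_ND n s0 U F w > lam"
    have Sne: "S \<noteq> {}" using flam lam fdef by auto
    then have "lam < Sup S" using flam fdef by simp
    then obtain x where xS: "x \<in> S" and lx: "lam < x" using less_cSup_iff[OF Sne bddS] by auto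
    from xS obtain \<psi> and ns :: "nat \<Rightarrow> nat" where x: "x = (INF i. (cmod (cinner \<psi> (s (ns i))))\<^sup>2)" and
      u: "unit_vec_n n \<psi>" and pF: "\<psi> \<in> F" and ns: "strict_mono ns" unfolding S_def by blast
    have xle: "x \<le> Qf b m (s (ns i))" for i
    proof -
      have "x \<le> (cmod (cinner \<psi> (s (ns i))))\<^sup>2" unfolding x
        by (rule cINF_lower) (auto intro!: bdd_belowI[of _ 0])
      also have "\<dots> \<le> Qf b m (s (ns i))"
        using cs_span[OF b, of \<psi> "s (ns i)"] pF u sc F by (auto simp: unit_vec_n_iff)
      finally show ?thesis .
    qed
    have "lam + (x - lam) / 2 < Qf b m (s (ns i))" for i using xle[of i] lx by (simp add: field_simps)
    then have "range ns \<subseteq> {k. Qf b m (s k) > lam + (x - lam) / 2}" by auto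
    then have "infinite {k. Qf b m (s k) > lam + (x - lam) / 2}"
      using strict_mono_range_infinite[OF ns] finite_subset by blast
    then show "crit (\<lambda>k. Qf b m (nd_run s0 U w k)) lam"
      unfolding crit_def s_def using lx by (intro exI[of _ "(x - lam)/2"]) auto
  next
    assume "crit (\<lambda>k. Qf b m (nd_run s0 U w k)) lam"
    then obtain \<epsilon> where ep: "\<epsilon> > 0" and inf: "infinite {k. Qf b m (s k) > lam + \<epsilon>}"
      unfolding crit_def s_def by auto
    obtain e :: "nat \<Rightarrow> nat" where e: "strict_mono e" "\<And>i. e i \<in> {k. Qf b m (s k) > lam + \<epsilon>}"
      using infinite_enumerate[OF inf] by blast
    define X where "X = (\<lambda>i j. if j < m then cinner (b j) (s (e i)) else 0)"
    have Xb: "cmod (X i j) \<le> 1" for i j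
    proof (cases "j < m")
      case True
      have "nrm (b j) = 1" using b True unfolding onf_def
        using cinner_self_real[of "b j"] nrm_nonneg[of "b j"] by (auto simp: power2_eq_1_iff)
      then show ?thesis unfolding X_def using cs[of "b j" "s (e i)"] True onf_carrier[OF b True] sc[of "e i"] s1[of "e i"]
        by auto
    next
      case False
      then show ?thesis unfolding X_def by simp
    qed
    obtain r :: "nat \<Rightarrow> nat" and L where r: "strict_mono r" and L: "\<forall>j<m. (\<lambda>i. X (r i) j) \<longlonglongrightarrow> L j"
      using bw_complex[where X=X and B=1 and m=m] Xb by blast
    define t where "t = e \<circ> r"
    have t: "strict_mono t" unfolding t_def using e(1) r strict_mono_o by blast
    define A where "A = (\<Sum>j<m. (cmod (L j))^2)"
    have QX: "Qf b m (s (t i)) = (\<Sum>j<m. (cmod (X (r i) j))^2)" for i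
      unfolding Qf_def X_def t_def by simp
    have QA: "(\<lambda>i. Qf b m (s (t i))) \<longlonglongrightarrow> A"
      unfolding QX A_def using L by (intro tendsto_intros) auto
    have "lam + \<epsilon> \<le> A"
      using QA by (rule LIMSEQ_le_const) (use e(2) t_def in \<open>auto intro: less_imp_le\<close>)
    then have Apos: "A > 0" using lam ep by linarith
    define Ls where "Ls = sqrt A"
    have Lspos: "Ls > 0" unfolding Ls_def using Apos by simp
    have LsA: "Ls * Ls = A" unfolding Ls_def using Apos by simp
    define c where "c = (\<lambda>j. L j / complex_of_real Ls)"
    define \<psi> where "\<psi> = lincomb_b n b m c"
    have psiF: "\<psi> \<in> F" unfolding \<psi>_def F by (rule lincomb_in_spanF[OF b])
    have "(nrm \<psi>)^2 = (\<Sum>j<m. (cmod (c j))^2)" unfolding \<psi>_def by (rule nrm_lincomb_sq[OF b])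
    also have "\<dots> = A / (Ls*Ls)" unfolding c_def A_def
      using Lspos by (simp add: norm_divide power_divide sum_divide_distrib power2_eq_square)
    also have "\<dots> = 1" using LsA Apos by simp
    finally have "nrm \<psi> = 1" using nrm_nonneg[of \<psi>] by (simp add: power2_eq_1_iff)
    then have u: "unit_vec_n n \<psi>" unfolding unit_vec_n_iff \<psi>_def by simp
    have bc: "\<forall>j<m. b j \<in> carrier_vec n" using b unfolding onf_def by auto
    have ci: "cinner \<psi> (s (t i)) = (\<Sum>j<m. cnj (c j) * X (r i) j)" for i
      unfolding \<psi>_def using bc sc by (subst cinner_lincomb_left) (auto simp: X_def t_def)
    have "(\<lambda>i. \<Sum>j<m. cnj (c j) * X (r i) j) \<longlonglongrightarrow> (\<Sum>j<m. cnj (c j) * L j)"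
      using L by (intro tendsto_intros) auto
    moreover have "(\<Sum>j<m. cnj (c j) * L j) = complex_of_real Ls"
    proof -
      have "cnj (c j) * L j = complex_of_real ((cmod (L j))^2 / Ls)" for j
      proof -
        have "cnj (c j) * L j = (L j * cnj (L j)) / complex_of_real Ls"
          unfolding c_def by (simp add: mult.commute)
        also have "\<dots> = complex_of_real ((cmod (L j))^2) / complex_of_real Ls"
          by (simp add: cmod_sq_complex)
        finally show ?thesis by simp
      qed
      then have "(\<Sum>j<m. cnj (c j) * L j) = complex_of_real (A / Ls)"
        unfolding A_def by (simp add: sum_divide_distrib)
      also have "A / Ls = Ls" using LsA Lspos by (metis nonzero_mult_div_cancel_left less_irrefl)
      finally show ?thesis .
    qed
    ultimately have lim: "(\<lambda>i. cinner \<psi> (s (t i))) \<longlonglongrightarrow> complex_of_real Ls" using ci by simp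
    then have "(\<lambda>i. (cmod (cinner \<psi> (s (t i))))^2) \<longlonglongrightarrow> (cmod (complex_of_real Ls))^2"
      by (intro tendsto_intros)
    moreover have "(cmod (complex_of_real Ls))^2 = A" using LsA Lspos by (simp add: power2_eq_square)
    ultimately have lim2: "(\<lambda>i. (cmod (cinner \<psi> (s (t i))))^2) \<longlonglongrightarrow> A" by simp
    have "lam + \<epsilon>/2 < A" using \<open>lam + \<epsilon> \<le> A\<close> ep by (simp add: field_simps)
    then have "eventually (\<lambda>i. lam + \<epsilon>/2 < (cmod (cinner \<psi> (s (t i))))^2) sequentially"
      using lim2 order_tendstoD(1) by blast
    then obtain N where N: "\<forall>i\<ge>N. lam + \<epsilon>/2 < (cmod (cinner \<psi> (s (t i))))^2"
      unfolding eventually_sequentially by auto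
    define ns where "ns = (\<lambda>i. t (i + N))"
    have nsm: "strict_mono ns" unfolding ns_def using t by (simp add: strict_mono_def)
    define x where "x = (INF i. (cmod (cinner \<psi> (s (ns i))))^2)"
    have xS: "x \<in> S" unfolding S_def x_def using psiF u nsm by blast
    have "lam + \<epsilon>/2 \<le> x" unfolding x_def using N
      by (intro cINF_greatest) (auto simp: ns_def less_imp_le)
    then have "lam < x" using ep by (simp add: field_simps)
    also have "x \<le> Sup S" using xS bddS by (rule cSup_upper)
    finally show "f_ND n s0 U F w > lam" using fdef xS by auto
  qed
qed

lemma strict_mono_add:
  assumes "strict_mono (r::nat\<Rightarrow>nat)" shows "r a + k \<le> r (a + k)"
proof (induction k)
  case 0 show ?case by simp
next
  case (Suc k)
  have "r (a + k) < r (a + Suc k)" using assms by (simp add: strict_mono_def)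
  then show ?case using Suc by simp
qed

lemma rec_lemma:
  assumes V: "V \<in> carrier_mat n n" "adjoint_mat V * V = 1\<^sub>m n"
    and y0: "y 0 \<in> carrier_vec n" and ys: "\<And>d. y (Suc d) = V *\<^sub>v y d"
    and eta: "\<eta> > 0"
  shows "infinite {d. nrm (y d - y 0) < \<eta>}"
proof -
  have yc: "y d \<in> carrier_vec n" for d by (induction d) (use y0 ys V in auto)
  have yn: "nrm (y d) = nrm (y 0)" for d
    by (induction d) (use ys V yc unitary_nrm in auto)
  have shift: "nrm (y (a + k) - y (a + k')) = nrm (y k - y k')" for a k k'
  proof (induction a)
    case 0 show ?case by simp
  next
    case (Suc a)
    have "y (Suc a + k) - y (Suc a + k') = V *\<^sub>v (y (a + k) - y (a + k'))"
      using ys V yc by (simp add: mult_minus_distrib_mat_vec)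
    then show ?case using Suc unitary_nrm[OF V] yc by auto
  qed
  define X where "X = (\<lambda>d i. if i < n then y d $ i else 0)"
  have Xb: "cmod (X d i) \<le> nrm (y 0)" for d i
    unfolding X_def using nrm_coord[of i "y d"] yc[of d] yn[of d] nrm_nonneg[of "y 0"] by auto
  obtain r :: "nat \<Rightarrow> nat" and L where r: "strict_mono r" and L: "\<forall>i<n. (\<lambda>d. X (r d) i) \<longlonglongrightarrow> L i"
    using bw_complex[where X=X and B="nrm (y 0)" and m=n] Xb by blast
  define lv where "lv = vec n L"
  have nr: "nrm (y (r d) - lv) = sqrt (\<Sum>i<n. (cmod (X (r d) i - L i))^2)" for d
    unfolding nrm_def L2_set_def X_def lv_def using yc[of "r d"] by simp
  have "(\<lambda>d. sqrt (\<Sum>i<n. (cmod (X (r d) i - L i))^2)) \<longlonglongrightarrow> sqrt (\<Sum>i<n. (cmod (L i - L i))^2)"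
    using L by (intro tendsto_intros) auto
  then have lim: "(\<lambda>d. nrm (y (r d) - lv)) \<longlonglongrightarrow> 0" unfolding nr by simp
  have "eventually (\<lambda>d. nrm (y (r d) - lv) < \<eta> / 2) sequentially"
    by (rule order_tendstoD(2)[OF lim]) (use eta in simp)
  then obtain N where N: "\<And>d. d \<ge> N \<Longrightarrow> nrm (y (r d) - lv) < \<eta> / 2"
    unfolding eventually_sequentially by auto
  have lvc: "lv \<in> carrier_vec n" unfolding lv_def by simp
  have mem: "r d - r N \<in> {d. nrm (y d - y 0) < \<eta>}" if "d > N" for d
  proof -
    have le: "r N < r d" using r that by (simp add: strict_mono_less)
    have "nrm (y (r d - r N) - y 0) = nrm (y (r N + (r d - r N)) - y (r N + 0))"
      using shift by metis
    also have "\<dots> = nrm (y (r d) - y (r N))" using le by simp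
    also have "\<dots> \<le> nrm (y (r d) - lv) + nrm (lv - y (r N))"
      by (rule nrm_triangle) (use yc[of "r d"] yc[of "r N"] lvc in auto)
    also have "nrm (lv - y (r N)) = nrm (y (r N) - lv)"
      by (rule nrm_minus_commute) (use yc[of "r N"] lvc in auto)
    also have "nrm (y (r d) - lv) + nrm (y (r N) - lv) < \<eta> / 2 + \<eta> / 2"
      using N[of d] N[of N] that by (intro add_strict_mono) auto
    finally show ?thesis by simp
  qed
  show ?thesis
    unfolding infinite_nat_iff_unbounded_le
  proof
    fix M
    define d where "d = N + (M + 1)"
    have "r N + (M + 1) \<le> r d" unfolding d_def by (rule strict_mono_add[OF r])
    then have "M \<le> r d - r N" by simp
    moreover have "r d - r N \<in> {d. nrm (y d - y 0) < \<eta>}" by (rule mem) (simp add: d_def)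
    ultimately show "\<exists>k\<ge>M. k \<in> {d. nrm (y d - y 0) < \<eta>}" by blast
  qed
qed

lemma sq_diff_le:
  fixes a c :: complex
  assumes "cmod a \<le> 1" "cmod c \<le> 1"
  shows "(cmod c)^2 - (cmod a)^2 \<le> 2 * cmod (a - c)"
proof -
  have "(cmod c)^2 - (cmod a)^2 = (cmod c - cmod a) * (cmod c + cmod a)"
    by (simp add: power2_eq_square algebra_simps)
  also have "\<dots> \<le> \<bar>cmod c - cmod a\<bar> * (cmod c + cmod a)" by (rule mult_right_mono) auto
  also have "\<dots> \<le> cmod (a - c) * 2"
  proof (rule mult_mono)
    show "\<bar>cmod c - cmod a\<bar> \<le> cmod (a - c)"
      using norm_triangle_ineq3[of c a] by (simp add: norm_minus_commute)
    show "cmod c + cmod a \<le> 2" using assms by simp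
  qed auto
  finally show ?thesis by simp
qed

lemma onf_nrm: "onf n b m \<Longrightarrow> j < m \<Longrightarrow> nrm (b j) = 1"
  unfolding onf_def using cinner_self_real[of "b j"] nrm_nonneg[of "b j"]
  by (auto simp: power2_eq_1_iff)

lemma Qf_lip:
  assumes b: "onf n b m" and u: "u \<in> carrier_vec n" "nrm u \<le> 1" and v: "v \<in> carrier_vec n" "nrm v \<le> 1"
  shows "Qf b m u - Qf b m v \<le> 2 * real m * nrm (u - v)"
proof -
  have t: "(cmod (cinner (b j) u))^2 - (cmod (cinner (b j) v))^2 \<le> 2 * nrm (u - v)" if j: "j<m" for j
  proof -
    have bj: "b j \<in> carrier_vec n" and nb: "nrm (b j) = 1" using onf_carrier[OF b j] onf_nrm[OF b j] by auto
    have a1: "cmod (cinner (b j) u) \<le> 1" using cs[of "b j" u] nb u bj by auto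
    have a2: "cmod (cinner (b j) v) \<le> 1" using cs[of "b j" v] nb v bj by auto
    have e: "cinner (b j) v - cinner (b j) u = cinner (b j) (v - u)"
      using u v by (simp add: cinner_minus_right)
    have "cmod (cinner (b j) (v - u)) \<le> nrm (v - u)" using cs[of "b j" "v - u"] nb u v bj by auto
    also have "nrm (v - u) = nrm (u - v)" using u v by (intro nrm_minus_commute) auto
    finally have "cmod (cinner (b j) v - cinner (b j) u) \<le> nrm (u - v)" using e by simp
    then show ?thesis using sq_diff_le[OF a2 a1] by linarith
  qed
  have "Qf b m u - Qf b m v = (\<Sum>j<m. (cmod (cinner (b j) u))^2 - (cmod (cinner (b j) v))^2)"
    unfolding Qf_def by (simp add: sum_subtractf)
  also have "\<dots> \<le> (\<Sum>j<m. 2 * nrm (u - v))" by (rule sum_mono) (use t in auto)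
  also have "\<dots> = 2 * real m * nrm (u - v)" by simp
  finally show ?thesis .
qed

lemma KL:
  assumes L: "L \<in> QBA_class \<Sigma> lam" and lam: "0 \<le> lam" and wL: "w \<in> L" and bs: "\<beta> \<in> \<Sigma>"
  shows "\<exists>k0. (\<lambda>i. if i < k0 then w i else \<beta>) \<in> L"
proof -
  obtain n s0 U F where qa: "is_QA \<Sigma> n s0 U F" and Ld: "L = QBA_lang \<Sigma> n s0 U F lam"
    using L unfolding QBA_class_def by blast
  have "subspace_n n F" using qa unfolding is_QA_def by auto
  then obtain b m where b: "onf n b m" and F: "F = spanF n b m" using basis_exists by blast
  have w: "w \<in> omega_words \<Sigma>" and fw: "f_ND n s0 U F w > lam" using wL Ld unfolding QBA_lang_def by auto
  have "crit (\<lambda>k. Qf b m (nd_run s0 U w k)) lam" using CL[OF qa w b F lam] fw by simp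
  then obtain \<epsilon> where ep: "\<epsilon> > 0" and inf: "infinite {k. Qf b m (nd_run s0 U w k) > lam + \<epsilon>}"
    unfolding crit_def by auto
  then obtain k0 where k0: "Qf b m (nd_run s0 U w k0) > lam + \<epsilon>" using not_finite_existsD by blast
  define w' where "w' = (\<lambda>i. if i < k0 then w i else \<beta>)"
  have w': "w' \<in> omega_words \<Sigma>" using w bs unfolding w'_def omega_words_def by auto
  have pre: "nd_run s0 U w' k = nd_run s0 U w k" if "k \<le> k0" for k
    using that by (induction k) (auto simp: w'_def)
  define y where "y = (\<lambda>d. nd_run s0 U w' (k0 + d))"
  have V: "U \<beta> \<in> carrier_mat n n" "adjoint_mat (U \<beta>) * U \<beta> = 1\<^sub>m n"
    using qa bs unfolding is_QA_def unitary_n_def by auto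
  have ys: "y (Suc d) = U \<beta> *\<^sub>v y d" for d unfolding y_def w'_def by simp
  have yc: "y d \<in> carrier_vec n" "nrm (y d) = 1" for d unfolding y_def using run_props[OF qa w'] by auto
  define e2 where "e2 = \<epsilon> / 2"
  have e2: "e2 > 0" "\<epsilon> = 2 * e2" unfolding e2_def using ep by auto
  define \<eta> where "\<eta> = e2 / (2 * real m + 1)"
  have eta: "\<eta> > 0" using e2 unfolding \<eta>_def by (simp add: pos_add_strict)
  have eta2: "2 * real m * \<eta> \<le> e2"
    unfolding \<eta>_def using e2 by (simp add: field_simps)
  have D: "infinite {d. nrm (y d - y 0) < \<eta>}" by (rule rec_lemma[where y=y, OF V yc(1)[of 0] ys eta])
  have y0: "y 0 = nd_run s0 U w k0" unfolding y_def using pre by simp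
  have sub: "(\<lambda>d. k0 + d) ` {d. nrm (y d - y 0) < \<eta>} \<subseteq> {k. Qf b m (nd_run s0 U w' k) > lam + e2}"
  proof clarsimp
    fix d assume d: "nrm (y d - y 0) < \<eta>"
    have "Qf b m (y 0) - Qf b m (y d) \<le> 2 * real m * nrm (y 0 - y d)"
      by (rule Qf_lip[OF b]) (use yc(1)[of 0] yc(1)[of d] yc(2)[of 0] yc(2)[of d] in auto)
    also have "nrm (y 0 - y d) = nrm (y d - y 0)" using yc(1)[of 0] yc(1)[of d] by (intro nrm_minus_commute) auto
    also have "2 * real m * nrm (y d - y 0) \<le> 2 * real m * \<eta>" using d by (intro mult_left_mono) auto
    finally have "Qf b m (y 0) - Qf b m (y d) \<le> e2" using eta2 by linarith
    moreover have "Qf b m (y 0) > lam + \<epsilon>" using k0 y0 by simp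
    ultimately have "lam + e2 < Qf b m (y d)" using e2 by linarith
    then show "lam + e2 < Qf b m (nd_run s0 U w' (k0 + d))" unfolding y_def by simp
  qed
  have "infinite ((\<lambda>d. k0 + d) ` {d. nrm (y d - y 0) < \<eta>})"
    using D by (simp add: finite_image_iff inj_on_def)
  hence "infinite {k. Qf b m (nd_run s0 U w' k) > lam + e2}" using sub finite_subset by blast
  hence "crit (\<lambda>k. Qf b m (nd_run s0 U w' k)) lam" unfolding crit_def using e2 by blast
  hence "f_ND n s0 U F w' > lam" using CL[OF qa w' b F lam] by simp
  thus ?thesis using w' Ld unfolding QBA_lang_def w'_def by auto
qed

definition permmat :: "nat \<Rightarrow> (nat \<Rightarrow> nat) \<Rightarrow> complex mat" where
  "permmat n p = mat n n (\<lambda>(i,j). if i = p j then 1 else 0)"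

lemma permmat_mult_unit:
  assumes j: "j < n"
  shows "permmat n p *\<^sub>v unit_vec n j = unit_vec n (p j)"
proof (rule eq_vecI)
  fix i assume "i < dim_vec (unit_vec n (p j))"
  hence i: "i < n" by simp
  have "(permmat n p *\<^sub>v unit_vec n j) $ i =
      (\<Sum>k\<in>{0..<n}. (if i = p k then 1 else 0) * (if k = j then 1 else 0))"
    using i by (simp add: permmat_def scalar_prod_def unit_vec_def)
  also have "\<dots> = (\<Sum>k\<in>{0..<n}. if k = j then (if i = p j then 1 else 0) else (0::complex))"
    by (rule sum.cong) auto
  also have "\<dots> = (if i = p j then 1 else 0)" using j by (simp add: sum.delta)
  finally show "(permmat n p *\<^sub>v unit_vec n j) $ i = unit_vec n (p j) $ i"
    using i by (simp add: unit_vec_def)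
qed (simp add: permmat_def)

lemma permmat_unitary:
  assumes pn: "\<forall>j<n. p j < n" and inj: "inj_on p {..<n}"
  shows "unitary_n n (permmat n p)"
  unfolding unitary_n_def
proof
  show "permmat n p \<in> carrier_mat n n" unfolding permmat_def by simp
  show "adjoint_mat (permmat n p) * permmat n p = 1\<^sub>m n"
  proof (rule eq_matI)
    fix k l assume "k < dim_row (1\<^sub>m n :: complex mat)" "l < dim_col (1\<^sub>m n :: complex mat)"
    hence k: "k < n" and l: "l < n" by auto
    have "(adjoint_mat (permmat n p) * permmat n p) $$ (k, l) =
        (\<Sum>i\<in>{0..<n}. cnj (if i = p k then 1 else 0) * (if i = p l then 1 else 0))"
      using k l by (simp add: permmat_def adjoint_mat_def scalar_prod_def)
    also have "\<dots> = (\<Sum>i\<in>{0..<n}. if i = p k then (if p k = p l then 1 else 0) else (0::complex))"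
      by (rule sum.cong) auto
    also have "\<dots> = (if p k = p l then 1 else 0)" using pn k by (simp add: sum.delta)
    also have "\<dots> = (if k = l then 1 else 0)" using inj k l by (auto simp: inj_on_def)
    finally show "(adjoint_mat (permmat n p) * permmat n p) $$ (k, l) = 1\<^sub>m n $$ (k, l)"
      using k l by simp
  qed (auto simp: permmat_def adjoint_mat_def)
qed

primrec pst :: "('a \<Rightarrow> nat \<Rightarrow> nat) \<Rightarrow> nat \<Rightarrow> (nat \<Rightarrow> 'a) \<Rightarrow> nat \<Rightarrow> nat" where
  "pst p j0 w 0 = j0"
| "pst p j0 w (Suc k) = p (w k) (pst p j0 w k)"

lemma crit_indicator:
  assumes "0 \<le> lam" "lam < 1"
  shows "crit (\<lambda>k. if P k then 1 else 0) lam \<longleftrightarrow> infinite {k. P k}"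
proof
  assume "crit (\<lambda>k. if P k then 1 else 0) lam"
  then obtain \<epsilon> where ep: "\<epsilon> > 0" and inf: "infinite {k. (if P k then 1 else 0) > lam + \<epsilon>}"
    unfolding crit_def by auto
  have "{k. (if P k then 1 else 0) > lam + \<epsilon>} \<subseteq> {k. P k}" using ep assms by auto
  then show "infinite {k. P k}" using inf finite_subset by blast
next
  assume inf: "infinite {k. P k}"
  define e where "e = (1 - lam) / 2"
  have "2 * e = 1 - lam" unfolding e_def by simp
  then have e: "e > 0" "1 = lam + 2 * e" using assms by auto
  have "{k. P k} \<subseteq> {k. (if P k then 1 else 0) > lam + e}" using e by auto
  then have "infinite {k. (if P k then 1 else 0) > lam + e}" using inf finite_subset by blast
  then show "crit (\<lambda>k. if P k then 1 else 0) lam" unfolding crit_def using e by blast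
qed

lemma cinner_unit_vec:
  assumes "i < n" "j < n"
  shows "cinner (unit_vec n i) (unit_vec n j) = (if i = j then 1 else 0)"
proof -
  have "cinner (unit_vec n i) (unit_vec n j) = (\<Sum>k<n. if k = i then (if i = j then 1 else 0) else 0)"
    unfolding cinner_def by (rule sum.cong) (auto simp: unit_vec_def)
  also have "\<dots> = (if i = j then 1 else 0)" using assms by (simp add: sum.delta)
  finally show ?thesis .
qed

lemma perm_QA:
  assumes fin: "finite \<Sigma>" and n: "j0 < n" "t < n"
    and pn: "\<forall>\<sigma>\<in>\<Sigma>. \<forall>j<n. p \<sigma> j < n" and pinj: "\<forall>\<sigma>\<in>\<Sigma>. inj_on (p \<sigma>) {..<n}"
    and lam: "0 \<le> lam" "lam < 1"
  shows "{w \<in> omega_words \<Sigma>. infinite {k. pst p j0 w k = t}} \<in> QBA_class \<Sigma> lam"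
proof -
  define s0 where "s0 = (unit_vec n j0 :: complex vec)"
  define U where "U = (\<lambda>\<sigma>. permmat n (p \<sigma>))"
  define b where "b = (\<lambda>_::nat. (unit_vec n t :: complex vec))"
  define F where "F = spanF n b 1"
  have ob: "onf n b 1" unfolding onf_def b_def using n by (simp add: cinner_unit_vec)
  have qa: "is_QA \<Sigma> n s0 U F" unfolding is_QA_def
  proof (intro conjI ballI)
    show "finite \<Sigma>" by fact
    show "unit_vec_n n s0" unfolding unit_vec_n_def s0_def using n by (simp add: cinner_unit_vec)
    fix \<sigma> assume "\<sigma> \<in> \<Sigma>"
    then show "unitary_n n (U \<sigma>)" unfolding U_def using pn pinj by (intro permmat_unitary) auto
  next
    show "subspace_n n F" unfolding F_def by (rule spanF_subspace[OF ob])
  qed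
  have run: "nd_run s0 U w k = unit_vec n (pst p j0 w k) \<and> pst p j0 w k < n"
    if w: "w \<in> omega_words \<Sigma>" for w k
  proof (induction k)
    case 0 then show ?case using n by (simp add: s0_def)
  next
    case (Suc k)
    have "w k \<in> \<Sigma>" using w unfolding omega_words_def by auto
    then show ?case using Suc pn by (simp add: U_def permmat_mult_unit)
  qed
  have Q: "Qf b 1 (nd_run s0 U w k) = (if pst p j0 w k = t then 1 else 0)"
    if w: "w \<in> omega_words \<Sigma>" for w k
    using run[OF w, of k] n unfolding Qf_def b_def by (simp add: cinner_unit_vec)
  have "QBA_lang \<Sigma> n s0 U F lam = {w \<in> omega_words \<Sigma>. infinite {k. pst p j0 w k = t}}"
  proof (intro Set.set_eqI iffI)
    fix w assume "w \<in> QBA_lang \<Sigma> n s0 U F lam"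
    then have w: "w \<in> omega_words \<Sigma>" and f: "f_ND n s0 U F w > lam" unfolding QBA_lang_def by auto
    have "crit (\<lambda>k. Qf b 1 (nd_run s0 U w k)) lam" using CL[OF qa w ob F_def lam(1)] f by simp
    then show "w \<in> {w \<in> omega_words \<Sigma>. infinite {k. pst p j0 w k = t}}"
      using w Q[OF w] crit_indicator[OF lam] by simp
  next
    fix w assume "w \<in> {w \<in> omega_words \<Sigma>. infinite {k. pst p j0 w k = t}}"
    then have w: "w \<in> omega_words \<Sigma>" and i: "infinite {k. pst p j0 w k = t}" by auto
    have "crit (\<lambda>k. Qf b 1 (nd_run s0 U w k)) lam" using Q[OF w] crit_indicator[OF lam] i by simp
    then show "w \<in> QBA_lang \<Sigma> n s0 U F lam"
      using CL[OF qa w ob F_def lam(1)] w unfolding QBA_lang_def by simp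
  qed
  then show ?thesis unfolding QBA_class_def using qa by blast
qed

definition swap2 :: "nat \<Rightarrow> nat" where "swap2 i = 1 - i"

definition p4 :: "nat \<Rightarrow> nat \<Rightarrow> nat" where "p4 \<sigma> = (if \<sigma> = 0 then (\<lambda>i. i) else swap2)"

definition L4 :: "(nat \<Rightarrow> nat) set" where
  "L4 = {w \<in> omega_words {0,1::nat}. infinite {k. pst p4 0 w k = 1}}"

lemma L4_class: "0 \<le> lam \<Longrightarrow> lam < 1 \<Longrightarrow> L4 \<in> QBA_class {0,1} lam"
  unfolding L4_def by (rule perm_QA) (auto simp: p4_def swap2_def inj_on_def)

lemma pst_p4_const0: "pst p4 0 (\<lambda>_. 0) k = 0"
  by (induction k) (auto simp: p4_def)

lemma mod2_swap: "Suc 0 - d mod 2 = Suc d mod (2::nat)" by presburger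

lemma pst_p4_w: "pst p4 0 (\<lambda>i. if i < k0 then 0 else 1) (k0 + d) = d mod 2"
proof -
  have pre: "pst p4 0 (\<lambda>i. if i < k0 then 0 else 1) k = 0" if "k \<le> k0" for k
    using that by (induction k) (auto simp: p4_def)
  show ?thesis
  proof (induction d)
    case 0 then show ?case using pre by simp
  next
    case (Suc d) then show ?case by (simp add: p4_def swap2_def mod2_swap)
  qed
qed

lemma part4:
  assumes lam: "0 \<le> lam" "lam < 1"
  shows "\<exists>(\<Gamma> :: nat set) L. finite \<Gamma> \<and> L \<in> QBA_class \<Gamma> lam \<and>
          omega_words \<Gamma> - L \<notin> QBA_class \<Gamma> lam"
proof (intro exI conjI)
  show "finite {0, 1::nat}" by simp
  show "L4 \<in> QBA_class {0, 1} lam" by (rule L4_class[OF lam])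
  show "omega_words {0, 1} - L4 \<notin> QBA_class {0, 1} lam"
  proof
    assume K: "omega_words {0, 1} - L4 \<in> QBA_class {0, 1} lam"
    have a: "(\<lambda>_. 0::nat) \<in> omega_words {0,1} - L4"
      unfolding L4_def omega_words_def using pst_p4_const0 by simp
    obtain k0 where k0: "(\<lambda>i. if i < k0 then 0 else 1) \<in> omega_words {0,1} - L4"
      using KL[OF K lam(1) a, of 1] by auto
    have "(\<lambda>i. if i < k0 then 0 else 1) \<in> L4"
      unfolding L4_def
    proof (intro CollectI conjI)
      show "(\<lambda>i::nat. if i < k0 then 0 else 1::nat) \<in> omega_words {0, 1}"
        unfolding omega_words_def by auto
      show "infinite {k. pst p4 0 (\<lambda>i. if i < k0 then 0 else 1) k = 1}"
        unfolding infinite_nat_iff_unbounded_le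
      proof
        fix M
        have "pst p4 0 (\<lambda>i. if i < k0 then 0 else 1) (k0 + (2 * M + 1)) = 1"
          by (simp only: pst_p4_w) simp
        then show "\<exists>k\<ge>M. k \<in> {k. pst p4 0 (\<lambda>i. if i < k0 then 0 else 1) k = 1}"
          by (intro exI[of _ "k0 + (2 * M + 1)"]) auto
      qed
    qed
    with k0 show False by auto
  qed
qed

definition p5 :: "nat \<Rightarrow> nat \<Rightarrow> nat" where "p5 \<sigma> = (if \<sigma> = 0 then swap2 else (\<lambda>i. i))"

definition L5 :: "nat \<Rightarrow> (nat \<Rightarrow> nat) set" where
  "L5 t = {w \<in> omega_words {0,1::nat}. infinite {k. pst p5 0 w k = t}}"

lemma L5_class: "0 \<le> lam \<Longrightarrow> lam < 1 \<Longrightarrow> t < 2 \<Longrightarrow> L5 t \<in> QBA_class {0,1} lam"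
  unfolding L5_def by (rule perm_QA) (auto simp: p5_def swap2_def inj_on_def)

lemma pst_p5_const0: "pst p5 0 (\<lambda>_. 0) k = k mod 2"
  by (induction k) (auto simp: p5_def swap2_def mod2_swap)

lemma pst_p5_w: "pst p5 0 (\<lambda>i. if i < k0 then 0 else 1) (k0 + d) = k0 mod 2"
proof -
  have pre: "pst p5 0 (\<lambda>i. if i < k0 then 0 else 1) k = k mod 2" if "k \<le> k0" for k
    using that by (induction k) (auto simp: p5_def swap2_def mod2_swap)
  show ?thesis
  proof (induction d)
    case 0 then show ?case using pre by simp
  next
    case (Suc d) then show ?case by (simp add: p5_def)
  qed
qed

lemma infinite_mod2: "infinite {k::nat. k mod 2 = t}" if "t < 2"
  unfolding infinite_nat_iff_unbounded_le
proof
  fix M show "\<exists>k\<ge>M. k \<in> {k. k mod 2 = t}"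
    using that by (intro exI[of _ "2 * M + t"]) auto
qed

lemma part5:
  assumes lam: "0 \<le> lam" "lam < 1"
  shows "\<exists>(\<Gamma> :: nat set) L1 L2. finite \<Gamma> \<and> L1 \<in> QBA_class \<Gamma> lam \<and> L2 \<in> QBA_class \<Gamma> lam \<and>
          L1 \<inter> L2 \<notin> QBA_class \<Gamma> lam"
proof (intro exI conjI)
  show "finite {0, 1::nat}" by simp
  show "L5 0 \<in> QBA_class {0, 1} lam" by (rule L5_class[OF lam]) simp
  show "L5 1 \<in> QBA_class {0, 1} lam" by (rule L5_class[OF lam]) simp
  show "L5 0 \<inter> L5 1 \<notin> QBA_class {0, 1} lam"
  proof
    assume K: "L5 0 \<inter> L5 1 \<in> QBA_class {0, 1} lam"
    have a: "(\<lambda>_. 0::nat) \<in> L5 0 \<inter> L5 1"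
      unfolding L5_def omega_words_def using infinite_mod2[of 0] infinite_mod2[of 1] by (simp add: pst_p5_const0)
    obtain k0 where k0: "(\<lambda>i. if i < k0 then 0 else 1) \<in> L5 0 \<inter> L5 1"
      using KL[OF K lam(1) a, of 1] by auto
    define t where "t = 1 - k0 mod 2"
    have t: "t < 2" "t \<noteq> k0 mod 2" unfolding t_def by presburger+
    have "{k. pst p5 0 (\<lambda>i. if i < k0 then 0 else 1) k = t} \<subseteq> {..<k0}"
    proof
      fix k assume k: "k \<in> {k. pst p5 0 (\<lambda>i. if i < k0 then 0 else 1) k = t}"
      show "k \<in> {..<k0}"
      proof (rule ccontr)
        assume "k \<notin> {..<k0}"
        then have "k = k0 + (k - k0)" by simp
        then have "pst p5 0 (\<lambda>i. if i < k0 then 0 else 1) k = k0 mod 2"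
          using pst_p5_w[of k0 "k - k0"] by metis
        then show False using k t by simp
      qed
    qed
    then have "finite {k. pst p5 0 (\<lambda>i. if i < k0 then 0 else 1) k = t}"
      using finite_subset by blast
    moreover have "(\<lambda>i. if i < k0 then 0 else 1) \<in> L5 t"
      using k0 t(1) by (cases "t = 0") (auto simp: less_2_cases_iff)
    ultimately show False unfolding L5_def by simp
  qed
qed

definition p3 :: "nat \<Rightarrow> nat \<Rightarrow> nat \<Rightarrow> nat" where
  "p3 k \<sigma> = (if \<sigma> = 0 then (\<lambda>i. Suc i mod (k+1)) else (\<lambda>i. i))"

definition L3 :: "nat \<Rightarrow> (nat \<Rightarrow> nat) set" where
  "L3 k = {w \<in> omega_words {0,1::nat}. infinite {i. pst (p3 k) 0 w i = k}}"

definition X3 :: "(nat \<Rightarrow> nat) set" where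
  "X3 = {w \<in> omega_words {0,1::nat}. infinite {i. w i = 0}}"

lemma Suc_mod_cases: "i < Suc k \<Longrightarrow> Suc i mod (Suc k) = (if i = k then 0 else Suc i)"
  by auto

lemma L3_class: "0 \<le> lam \<Longrightarrow> lam < 1 \<Longrightarrow> L3 k \<in> QBA_class {0,1} lam"
  unfolding L3_def
proof (rule perm_QA)
  show "\<forall>\<sigma>\<in>{0, 1}. inj_on (p3 k \<sigma>) {..<k + 1}"
    unfolding p3_def inj_on_def
  proof (intro ballI)
    fix \<sigma> :: nat and x y assume "x \<in> {..<k + 1}" "y \<in> {..<k + 1}"
    then have x: "x < Suc k" and y: "y < Suc k" by auto
    show "(if \<sigma> = 0 then \<lambda>i. Suc i mod (k + 1) else (\<lambda>i. i)) x =
          (if \<sigma> = 0 then \<lambda>i. Suc i mod (k + 1) else (\<lambda>i. i)) y \<longrightarrow> x = y"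
      using Suc_mod_cases[OF x] Suc_mod_cases[OF y] x y by (auto split: if_splits)
  qed
qed (auto simp: p3_def)

definition cnt :: "(nat \<Rightarrow> nat) \<Rightarrow> nat \<Rightarrow> nat" where
  "cnt w i = card {j. j < i \<and> w j = 0}"

lemma cnt_Suc: "cnt w (Suc i) = cnt w i + (if w i = 0 then 1 else 0)"
proof (cases "w i = 0")
  case True
  have "{j. j < Suc i \<and> w j = 0} = insert i {j. j < i \<and> w j = 0}" using True by auto
  moreover have "finite {j. j < i \<and> w j = 0}" by simp
  ultimately show ?thesis unfolding cnt_def using True by simp
next
  case False
  have "{j. j < Suc i \<and> w j = 0} = {j. j < i \<and> w j = 0}" using False by (auto simp: less_Suc_eq)
  then show ?thesis unfolding cnt_def using False by simp
qed

lemma cnt_0[simp]: "cnt w 0 = 0" unfolding cnt_def by simp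

lemma pst_p3: "pst (p3 k) 0 w i = cnt w i mod (k+1)"
  by (induction i) (auto simp: p3_def cnt_Suc mod_Suc_eq)

lemma cnt_mono: "i \<le> i' \<Longrightarrow> cnt w i \<le> cnt w i'"
  unfolding cnt_def by (rule card_mono) auto

lemma cnt_le_card: "finite {j. w j = 0} \<Longrightarrow> cnt w i \<le> card {j. w j = 0}"
  unfolding cnt_def by (rule card_mono) auto

lemma cnt_unbounded:
  assumes "infinite {j. w j = 0}" shows "\<exists>i. M \<le> cnt w i"
proof -
  obtain e :: "nat \<Rightarrow> nat" where e: "strict_mono e" "\<And>j. e j \<in> {j. w j = 0}"
    using infinite_enumerate[OF assms] by blast
  have sub: "e ` {..M} \<subseteq> {j. j < Suc (e M) \<and> w j = 0}"
    using e strict_mono_leD[OF e(1)] by (auto simp: less_Suc_eq_le)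
  have "card (e ` {..M}) = Suc M"
    using strict_mono_imp_inj_on[OF e(1)] by (simp add: card_image inj_on_subset)
  then have "Suc M \<le> cnt w (Suc (e M))" unfolding cnt_def using card_mono[OF _ sub] by simp
  then show ?thesis by (intro exI[of _ "Suc (e M)"]) simp
qed

lemma cnt_hit:
  assumes inf: "infinite {j. w j = 0}" and v: "cnt w N \<le> v"
  shows "\<exists>i\<ge>N. cnt w i = v"
proof (cases "v = cnt w N")
  case True then show ?thesis by auto
next
  case False
  then have vN: "cnt w N < v" using v by simp
  obtain i0 where i0: "v \<le> cnt w i0" using cnt_unbounded[OF inf] by blast
  define j where "j = (LEAST i. v \<le> cnt w i)"
  have Pj: "v \<le> cnt w j" unfolding j_def by (rule LeastI[of _ i0]) (rule i0)
  have j0: "j \<noteq> 0" using Pj vN by (intro notI) simp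
  then obtain j' where j': "j = Suc j'" by (cases j) auto
  have "\<not> v \<le> cnt w j'" unfolding j_def using j' not_less_Least[of j' "\<lambda>i. v \<le> cnt w i"]
    by (simp add: j_def)
  then have eq: "cnt w j = v" using Pj cnt_Suc[of w j'] j' by (auto split: if_splits)
  have "N \<le> j"
  proof (rule ccontr)
    assume "\<not> N \<le> j"
    then have "cnt w j \<le> cnt w N" by (intro cnt_mono) simp
    then show False using eq vN by simp
  qed
  then show ?thesis using eq by blast
qed

lemma X3_sub_L3: "w \<in> X3 \<Longrightarrow> w \<in> L3 k"
proof -
  assume "w \<in> X3"
  then have w: "w \<in> omega_words {0,1}" and inf: "infinite {i. w i = 0}" unfolding X3_def by auto
  have "infinite {i. cnt w i mod (k+1) = k}"
    unfolding infinite_nat_iff_unbounded_le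
  proof
    fix M
    define v where "v = k + cnt w M * (k+1)"
    have "cnt w M \<le> v" unfolding v_def by simp
    then obtain i where i: "i \<ge> M" "cnt w i = v" using cnt_hit[OF inf] by blast
    have "v mod (k+1) = k mod (k+1)" unfolding v_def by (rule mod_mult_self1)
    then have "v mod (k+1) = k" by simp
    then show "\<exists>i\<ge>M. i \<in> {i. cnt w i mod (k + 1) = k}" using i by auto
  qed
  then show "w \<in> L3 k" unfolding L3_def using w by (simp add: pst_p3)
qed

lemma notX3_notin_L3:
  assumes w: "w \<notin> X3" and k: "card {j. w j = 0} < k"
  shows "w \<notin> L3 k"
proof
  assume L: "w \<in> L3 k"
  then have wo: "w \<in> omega_words {0,1}" unfolding L3_def by auto
  then have fin: "finite {j. w j = 0}" using w unfolding X3_def by auto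
  have "{i. cnt w i mod (k+1) = k} = {}"
  proof -
    have "cnt w i mod (k+1) \<noteq> k" for i
    proof -
      have "cnt w i < k" using cnt_le_card[OF fin, of i] k by simp
      then show ?thesis by simp
    qed
    then show ?thesis by auto
  qed
  then show False using L unfolding L3_def by (simp add: pst_p3)
qed

lemma L3_omega: "w \<in> L3 k \<Longrightarrow> w \<in> omega_words {0,1}"
  unfolding L3_def by auto

lemma lim_L3: "set_lim_is L3 X3"
  unfolding set_lim_is_def
proof
  show "set_liminf L3 = X3"
  proof
    show "set_liminf L3 \<subseteq> X3"
    proof
      fix w assume "w \<in> set_liminf L3"
      then obtain k where k: "\<And>j. j \<ge> k \<Longrightarrow> w \<in> L3 j" unfolding set_liminf_def by auto
      show "w \<in> X3"
      proof (rule ccontr)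
        assume "w \<notin> X3"
        then have "w \<notin> L3 (max k (Suc (card {j. w j = 0})))" by (intro notX3_notin_L3) auto
        then show False using k by simp
      qed
    qed
    show "X3 \<subseteq> set_liminf L3" unfolding set_liminf_def using X3_sub_L3 by blast
  qed
  show "set_limsup L3 = X3"
  proof
    show "set_limsup L3 \<subseteq> X3"
    proof
      fix w assume w: "w \<in> set_limsup L3"
      show "w \<in> X3"
      proof (rule ccontr)
        assume nX: "w \<notin> X3"
        from w obtain j where j: "j \<ge> Suc (card {j. w j = 0})" "w \<in> L3 j"
          unfolding set_limsup_def by blast
        have "w \<notin> L3 j" using nX j(1) by (intro notX3_notin_L3) auto
        then show False using j by simp
      qed
    qed
    show "X3 \<subseteq> set_limsup L3" unfolding set_limsup_def using X3_sub_L3 by blast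
  qed
qed

lemma X3_not_class:
  assumes lam: "0 \<le> lam" shows "X3 \<notin> QBA_class {0,1} lam"
proof
  assume K: "X3 \<in> QBA_class {0,1} lam"
  have a: "(\<lambda>_. 0::nat) \<in> X3" unfolding X3_def omega_words_def by simp
  obtain k0 where k0: "(\<lambda>i. if i < k0 then 0 else 1) \<in> X3"
    using KL[OF K lam a, of 1] by auto
  have "{i. (if i < k0 then 0 else 1::nat) = 0} = {..<k0}" by auto
  then show False using k0 unfolding X3_def by simp
qed

lemma part3:
  assumes lam: "0 \<le> lam" "lam < 1"
  shows "\<exists>(\<Gamma> :: nat set) (L :: nat \<Rightarrow> (nat \<Rightarrow> nat) set) X. finite \<Gamma> \<and>
          (\<forall>k. L k \<in> QBA_class \<Gamma> lam) \<and> set_lim_is L X \<and> X \<notin> QBA_class \<Gamma> lam"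
  using L3_class[OF lam] lim_L3 X3_not_class[OF lam(1)]
  by (intro exI[of _ "{0,1}"] exI[of _ L3] exI[of _ X3]) auto

lemma sum_split_add: "(\<Sum>k<a+(b::nat). f k) = (\<Sum>k<a. f k) + (\<Sum>k<b. f (a + k))"
  by (induction b) (simp_all add: ac_simps)

lemma mv_index:
  assumes "i < dim_row M" "dim_vec v = dim_col M"
  shows "(M *\<^sub>v v) $ i = (\<Sum>k<dim_col M. M $$ (i,k) * v $ k)"
  using assms by (auto simp: scalar_prod_def atLeast0LessThan intro!: sum.cong)

lemma mm_index:
  assumes "i < dim_row A" "j < dim_col B" "dim_col A = dim_row B"
  shows "(A * B) $$ (i,j) = (\<Sum>k<dim_col A. A $$ (i,k) * B $$ (k,j))"
  using assms by (auto simp: scalar_prod_def atLeast0LessThan intro!: sum.cong)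

lemma unit_cols:
  assumes "unitary_n n U" "k < n" "l < n"
  shows "(\<Sum>i<n. cnj (U $$ (i,k)) * U $$ (i,l)) = (if k = l then 1 else 0)"
proof -
  have U: "U \<in> carrier_mat n n" "adjoint_mat U * U = 1\<^sub>m n" using assms(1) unfolding unitary_n_def by auto
  have "(adjoint_mat U * U) $$ (k,l) = (\<Sum>i<dim_col (adjoint_mat U). adjoint_mat U $$ (k,i) * U $$ (i,l))"
    by (rule mm_index) (use U assms in \<open>auto simp: adjoint_mat_def\<close>)
  also have "\<dots> = (\<Sum>i<n. cnj (U $$ (i,k)) * U $$ (i,l))"
    using U assms by (auto simp: adjoint_mat_def intro!: sum.cong)
  finally show ?thesis using U assms by simp
qed

lemma unitary_by_cols:
  assumes "U \<in> carrier_mat n n"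
    and "\<And>k l. k < n \<Longrightarrow> l < n \<Longrightarrow> (\<Sum>i<n. cnj (U $$ (i,k)) * U $$ (i,l)) = (if k = l then 1 else 0)"
  shows "unitary_n n U"
  unfolding unitary_n_def
proof
  show "U \<in> carrier_mat n n" by fact
  show "adjoint_mat U * U = 1\<^sub>m n"
  proof (rule eq_matI)
    fix k l assume "k < dim_row (1\<^sub>m n :: complex mat)" "l < dim_col (1\<^sub>m n :: complex mat)"
    then have k: "k < n" and l: "l < n" by auto
    have "(adjoint_mat U * U) $$ (k,l) = (\<Sum>i<dim_col (adjoint_mat U). adjoint_mat U $$ (k,i) * U $$ (i,l))"
      by (rule mm_index) (use assms(1) k l in \<open>auto simp: adjoint_mat_def\<close>)
    also have "\<dots> = (\<Sum>i<n. cnj (U $$ (i,k)) * U $$ (i,l))"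
      using assms(1) k l by (auto simp: adjoint_mat_def intro!: sum.cong)
    finally show "(adjoint_mat U * U) $$ (k,l) = 1\<^sub>m n $$ (k,l)" using assms(2)[OF k l] k l by simp
  qed (use assms(1) in \<open>auto simp: adjoint_mat_def\<close>)
qed

type_synonym 'a ona = "nat \<times> complex vec \<times> ('a \<Rightarrow> complex mat) \<times> (nat \<Rightarrow> complex vec) \<times> nat"

fun good :: "'a set \<Rightarrow> 'a ona \<Rightarrow> bool" where
  "good \<Sigma> (n, s0, U, b, m) \<longleftrightarrow> is_QA \<Sigma> n s0 U (spanF n b m) \<and> onf n b m"

fun langA :: "'a set \<Rightarrow> 'a ona \<Rightarrow> real \<Rightarrow> (nat \<Rightarrow> 'a) set" where
  "langA \<Sigma> (n, s0, U, b, m) lam = QBA_lang \<Sigma> n s0 U (spanF n b m) lam"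

fun Qseq :: "'a ona \<Rightarrow> (nat \<Rightarrow> 'a) \<Rightarrow> nat \<Rightarrow> real" where
  "Qseq (n, s0, U, b, m) w k = Qf b m (nd_run s0 U w k)"

lemma Qseq_eq: "Qseq (n, s0, U, b, m) w = (\<lambda>k. Qf b m (nd_run s0 U w k))"
  by (rule ext) simp

lemma langA_crit:
  assumes "good \<Sigma> A" "0 \<le> lam"
  shows "langA \<Sigma> A lam = {w \<in> omega_words \<Sigma>. crit (Qseq A w) lam}"
proof -
  obtain n s0 U b m where A: "A = (n, s0, U, b, m)" by (cases A) auto
  have qa: "is_QA \<Sigma> n s0 U (spanF n b m)" and ob: "onf n b m" using assms(1) A by auto
  show ?thesis unfolding A using CL[OF qa _ ob refl assms(2)]
    by (auto simp: QBA_lang_def Qseq_eq)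
qed

lemma langA_class: "good \<Sigma> A \<Longrightarrow> langA \<Sigma> A lam \<in> QBA_class \<Sigma> lam"
  by (cases A) (auto simp: QBA_class_def)

lemma class_good: "L \<in> QBA_class \<Sigma> lam \<Longrightarrow> \<exists>A. good \<Sigma> A \<and> L = langA \<Sigma> A lam"
proof -
  assume "L \<in> QBA_class \<Sigma> lam"
  then obtain n s0 U F where qa: "is_QA \<Sigma> n s0 U F" and L: "L = QBA_lang \<Sigma> n s0 U F lam"
    unfolding QBA_class_def by blast
  have "subspace_n n F" using qa unfolding is_QA_def by auto
  then obtain b m where b: "onf n b m" and F: "F = spanF n b m" using basis_exists by blast
  show ?thesis using qa b F L by (intro exI[of _ "(n, s0, U, b, m)"]) auto
qed

lemma Qseq_bounds:
  assumes "good \<Sigma> A" "w \<in> omega_words \<Sigma>"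
  shows "0 \<le> Qseq A w k \<and> Qseq A w k \<le> 1"
proof -
  obtain n s0 U b m where A: "A = (n, s0, U, b, m)" by (cases A) auto
  have qa: "is_QA \<Sigma> n s0 U (spanF n b m)" and ob: "onf n b m" using assms(1) A by auto
  have r: "nd_run s0 U w k \<in> carrier_vec n" "nrm (nd_run s0 U w k) = 1" using run_props[OF qa assms(2)] by auto
  show ?thesis unfolding A using Qf_nonneg bessel[OF ob r(1)] r(2) by simp
qed

definition dsv :: "nat \<Rightarrow> nat \<Rightarrow> complex vec \<Rightarrow> complex vec \<Rightarrow> complex vec" where
  "dsv n1 n2 x y = vec (n1 + n2) (\<lambda>i. if i < n1 then x $ i else y $ (i - n1))"

definition dsm :: "nat \<Rightarrow> nat \<Rightarrow> complex mat \<Rightarrow> complex mat \<Rightarrow> complex mat" where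
  "dsm n1 n2 A B = mat (n1 + n2) (n1 + n2) (\<lambda>(i,j). if i < n1 \<and> j < n1 then A $$ (i,j)
      else if n1 \<le> i \<and> n1 \<le> j then B $$ (i - n1, j - n1) else 0)"

lemma dsv_carrier[simp]: "dsv n1 n2 x y \<in> carrier_vec (n1 + n2)"
  unfolding dsv_def by simp

lemma dsv_dim[simp]: "dim_vec (dsv n1 n2 x y) = n1 + n2"
  unfolding dsv_def by simp

lemma dsm_mult:
  assumes A: "A \<in> carrier_mat n1 n1" and B: "B \<in> carrier_mat n2 n2"
    and x: "x \<in> carrier_vec n1" and y: "y \<in> carrier_vec n2"
  shows "dsm n1 n2 A B *\<^sub>v dsv n1 n2 x y = dsv n1 n2 (A *\<^sub>v x) (B *\<^sub>v y)"
proof (rule eq_vecI)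
  fix i assume "i < dim_vec (dsv n1 n2 (A *\<^sub>v x) (B *\<^sub>v y))"
  then have i: "i < n1 + n2" by simp
  have "(dsm n1 n2 A B *\<^sub>v dsv n1 n2 x y) $ i =
      (\<Sum>k<n1+n2. dsm n1 n2 A B $$ (i,k) * dsv n1 n2 x y $ k)"
    using i by (subst mv_index) (auto simp: dsm_def)
  also have "\<dots> = (\<Sum>k<n1. dsm n1 n2 A B $$ (i,k) * dsv n1 n2 x y $ k)
      + (\<Sum>k<n2. dsm n1 n2 A B $$ (i,n1+k) * dsv n1 n2 x y $ (n1+k))"
    by (rule sum_split_add)
  also have "\<dots> = dsv n1 n2 (A *\<^sub>v x) (B *\<^sub>v y) $ i"
  proof (cases "i < n1")
    case True
    have "(\<Sum>k<n1. dsm n1 n2 A B $$ (i,k) * dsv n1 n2 x y $ k) = (A *\<^sub>v x) $ i"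
      using True i A x by (subst mv_index) (auto simp: dsm_def dsv_def intro!: sum.cong)
    moreover have "(\<Sum>k<n2. dsm n1 n2 A B $$ (i,n1+k) * dsv n1 n2 x y $ (n1+k)) = 0"
      using True i by (auto simp: dsm_def dsv_def intro!: sum.neutral)
    ultimately show ?thesis using True i by (simp add: dsv_def)
  next
    case False
    have "(\<Sum>k<n1. dsm n1 n2 A B $$ (i,k) * dsv n1 n2 x y $ k) = 0"
      using False i by (auto simp: dsm_def dsv_def intro!: sum.neutral)
    moreover have "(\<Sum>k<n2. dsm n1 n2 A B $$ (i,n1+k) * dsv n1 n2 x y $ (n1+k)) = (B *\<^sub>v y) $ (i - n1)"
      using False i B y by (subst mv_index) (auto simp: dsm_def dsv_def intro!: sum.cong)
    ultimately show ?thesis using False i by (simp add: dsv_def)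
  qed
  finally show "(dsm n1 n2 A B *\<^sub>v dsv n1 n2 x y) $ i = dsv n1 n2 (A *\<^sub>v x) (B *\<^sub>v y) $ i" .
qed (simp add: dsm_def)

lemma dsm_unitary:
  assumes A: "unitary_n n1 A" and B: "unitary_n n2 B"
  shows "unitary_n (n1 + n2) (dsm n1 n2 A B)"
proof (rule unitary_by_cols)
  show "dsm n1 n2 A B \<in> carrier_mat (n1 + n2) (n1 + n2)" unfolding dsm_def by simp
  fix k l assume k: "k < n1 + n2" and l: "l < n1 + n2"
  let ?M = "dsm n1 n2 A B"
  have "(\<Sum>i<n1+n2. cnj (?M $$ (i,k)) * ?M $$ (i,l)) =
      (\<Sum>i<n1. cnj (?M $$ (i,k)) * ?M $$ (i,l)) + (\<Sum>i<n2. cnj (?M $$ (n1+i,k)) * ?M $$ (n1+i,l))"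
    by (rule sum_split_add)
  also have "\<dots> = (if k = l then 1 else 0)"
  proof (cases "k < n1")
    case kT: True
    show ?thesis
    proof (cases "l < n1")
      case True
      have "(\<Sum>i<n1. cnj (?M $$ (i,k)) * ?M $$ (i,l)) = (\<Sum>i<n1. cnj (A $$ (i,k)) * A $$ (i,l))"
        using kT True k l by (auto simp: dsm_def intro!: sum.cong)
      also have "\<dots> = (if k = l then 1 else 0)" by (rule unit_cols[OF A kT True])
      finally show ?thesis using kT True k l by (simp add: dsm_def)
    next
      case False
      then show ?thesis using kT k l by (auto simp: dsm_def intro!: sum.neutral)
    qed
  next
    case kF: False
    show ?thesis
    proof (cases "l < n1")
      case True
      then show ?thesis using kF k l by (auto simp: dsm_def intro!: sum.neutral)
    next
      case False
      have "(\<Sum>i<n2. cnj (?M $$ (n1+i,k)) * ?M $$ (n1+i,l)) = (\<Sum>i<n2. cnj (B $$ (i,k-n1)) * B $$ (i,l-n1))"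
        using kF False k l by (auto simp: dsm_def intro!: sum.cong)
      also have "\<dots> = (if k - n1 = l - n1 then 1 else 0)" by (rule unit_cols[OF B]) (use kF False k l in auto)
      also have "(k - n1 = l - n1) = (k = l)" using kF False by auto
      finally show ?thesis using kF False k l by (simp add: dsm_def)
    qed
  qed
  finally show "(\<Sum>i<n1+n2. cnj (?M $$ (i,k)) * ?M $$ (i,l)) = (if k = l then 1 else 0)" .
qed

lemma cinner_dsv:
  assumes "dim_vec x' = n1" "dim_vec y' = n2"
  shows "cinner (dsv n1 n2 x y) (dsv n1 n2 x' y') = cinner x x' + cinner y y'"
proof -
  have "cinner (dsv n1 n2 x y) (dsv n1 n2 x' y') =
      (\<Sum>i<n1. cnj (dsv n1 n2 x y $ i) * dsv n1 n2 x' y' $ i) + (\<Sum>i<n2. cnj (dsv n1 n2 x y $ (n1+i)) * dsv n1 n2 x' y' $ (n1+i))"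
    unfolding cinner_def dsv_dim by (rule sum_split_add)
  also have "\<dots> = cinner x x' + cinner y y'"
    unfolding cinner_def using assms by (auto simp: dsv_def intro!: arg_cong2[where f="(+)"] sum.cong)
  finally show ?thesis .
qed


fun dsA :: "real \<Rightarrow> real \<Rightarrow> 'a ona \<Rightarrow> 'a ona \<Rightarrow> 'a ona" where
  "dsA \<alpha> \<beta> (n1, s1, U1, b1, m1) (n2, s2, U2, b2, m2) =
    (n1 + n2, dsv n1 n2 (complex_of_real \<alpha> \<cdot>\<^sub>v s1) (complex_of_real \<beta> \<cdot>\<^sub>v s2),
     (\<lambda>\<sigma>. dsm n1 n2 (U1 \<sigma>) (U2 \<sigma>)),
     (\<lambda>j. if j < m1 then dsv n1 n2 (b1 j) (0\<^sub>v n2) else dsv n1 n2 (0\<^sub>v n1) (b2 (j - m1))),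
     m1 + m2)"

lemma cinner_zero_left: "dim_vec y = n \<Longrightarrow> cinner (0\<^sub>v n) y = 0"
  unfolding cinner_def by simp

lemma cinner_zero_right: "cinner x (0\<^sub>v n) = 0"
  unfolding cinner_def by simp
  
lemma Qf_smult: "Qf b m (complex_of_real \<alpha> \<cdot>\<^sub>v x) = \<alpha>^2 * Qf b m x"
  unfolding Qf_def by (simp add: cinner_smult_right norm_mult power_mult_distrib sum_distrib_left)

lemma Qf_dsv:
  assumes x: "x \<in> carrier_vec n1" and y: "y \<in> carrier_vec n2"
    and b1: "\<forall>j<m1. b1 j \<in> carrier_vec n1" and b2: "\<forall>j<m2. b2 j \<in> carrier_vec n2"
  shows "Qf (\<lambda>j. if j < m1 then dsv n1 n2 (b1 j) (0\<^sub>v n2) else dsv n1 n2 (0\<^sub>v n1) (b2 (j - m1))) (m1 + m2)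
      (dsv n1 n2 x y) = Qf b1 m1 x + Qf b2 m2 y"
proof -
  let ?b = "\<lambda>j. if j < m1 then dsv n1 n2 (b1 j) (0\<^sub>v n2) else dsv n1 n2 (0\<^sub>v n1) (b2 (j - m1))"
  have "Qf ?b (m1 + m2) (dsv n1 n2 x y) = (\<Sum>j<m1. (cmod (cinner (?b j) (dsv n1 n2 x y)))^2)
      + (\<Sum>j<m2. (cmod (cinner (?b (m1 + j)) (dsv n1 n2 x y)))^2)"
    unfolding Qf_def by (rule sum_split_add)
  also have "(\<Sum>j<m1. (cmod (cinner (?b j) (dsv n1 n2 x y)))^2) = Qf b1 m1 x"
    unfolding Qf_def using x y b1 by (intro sum.cong refl) (simp add: cinner_dsv cinner_zero_left)
  also have "(\<Sum>j<m2. (cmod (cinner (?b (m1 + j)) (dsv n1 n2 x y)))^2) = Qf b2 m2 y"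
    unfolding Qf_def using x y b2 by (intro sum.cong refl) (simp add: cinner_dsv cinner_zero_left)
  finally show ?thesis .
qed

lemma dsA_props:
  assumes g1: "good \<Sigma> A1" and g2: "good \<Sigma> A2" and ab: "0 \<le> \<alpha>" "0 \<le> \<beta>" "\<alpha>^2 + \<beta>^2 = 1"
  shows "good \<Sigma> (dsA \<alpha> \<beta> A1 A2)"
    and "w \<in> omega_words \<Sigma> \<Longrightarrow> Qseq (dsA \<alpha> \<beta> A1 A2) w k = \<alpha>^2 * Qseq A1 w k + \<beta>^2 * Qseq A2 w k"
proof -
  obtain n1 s1 U1 b1 m1 where A1: "A1 = (n1, s1, U1, b1, m1)" by (cases A1) auto
  obtain n2 s2 U2 b2 m2 where A2: "A2 = (n2, s2, U2, b2, m2)" by (cases A2) auto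
  have qa1: "is_QA \<Sigma> n1 s1 U1 (spanF n1 b1 m1)" and ob1: "onf n1 b1 m1" using g1 A1 by auto
  have qa2: "is_QA \<Sigma> n2 s2 U2 (spanF n2 b2 m2)" and ob2: "onf n2 b2 m2" using g2 A2 by auto
  have bc1: "\<forall>j<m1. b1 j \<in> carrier_vec n1" and bc2: "\<forall>j<m2. b2 j \<in> carrier_vec n2"
    using ob1 ob2 unfolding onf_def by auto
  have s1: "s1 \<in> carrier_vec n1" "cinner s1 s1 = 1" and s2: "s2 \<in> carrier_vec n2" "cinner s2 s2 = 1"
    using qa1 qa2 unfolding is_QA_def unit_vec_n_def by auto
  define b where "b = (\<lambda>j. if j < m1 then dsv n1 n2 (b1 j) (0\<^sub>v n2) else dsv n1 n2 (0\<^sub>v n1) (b2 (j - m1)))"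
  define s0 where "s0 = dsv n1 n2 (complex_of_real \<alpha> \<cdot>\<^sub>v s1) (complex_of_real \<beta> \<cdot>\<^sub>v s2)"
  define U where "U = (\<lambda>\<sigma>. dsm n1 n2 (U1 \<sigma>) (U2 \<sigma>))"
  have D: "dsA \<alpha> \<beta> A1 A2 = (n1 + n2, s0, U, b, m1 + m2)"
    unfolding A1 A2 b_def s0_def U_def by simp
  have ob: "onf (n1 + n2) b (m1 + m2)" unfolding onf_def
  proof (intro conjI allI impI)
    fix j assume "j < m1 + m2" then show "b j \<in> carrier_vec (n1 + n2)" unfolding b_def by simp
  next
    fix j k assume j: "j < m1 + m2" and k: "k < m1 + m2"
    show "cinner (b j) (b k) = (if j = k then 1 else 0)"
    proof (cases "j < m1")
      case jT: True
      show ?thesis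
      proof (cases "k < m1")
        case True then show ?thesis using jT bc1 ob1 unfolding b_def onf_def
          by (simp add: cinner_dsv cinner_zero_left)
      next
        case False then show ?thesis using jT bc1 bc2 j k unfolding b_def
          by (simp add: cinner_dsv cinner_zero_left cinner_zero_right)
      qed
    next
      case jF: False
      show ?thesis
      proof (cases "k < m1")
        case True then show ?thesis using jF bc1 bc2 j k unfolding b_def
          by (simp add: cinner_dsv cinner_zero_left cinner_zero_right)
      next
        case False
        have "cinner (b j) (b k) = cinner (b2 (j - m1)) (b2 (k - m1))"
          using jF False bc2 j k unfolding b_def by (simp add: cinner_dsv cinner_zero_left)
        also have "\<dots> = (if j - m1 = k - m1 then 1 else 0)" using ob2 jF False j k unfolding onf_def by auto
        also have "(j - m1 = k - m1) = (j = k)" using jF False by auto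
        finally show ?thesis .
      qed
    qed
  qed
  have qa: "is_QA \<Sigma> (n1 + n2) s0 U (spanF (n1 + n2) b (m1 + m2))" unfolding is_QA_def
  proof (intro conjI ballI)
    show "finite \<Sigma>" using qa1 unfolding is_QA_def by auto
    have "cinner s0 s0 = cnj (complex_of_real \<alpha>) * (complex_of_real \<alpha> * cinner s1 s1)
       + cnj (complex_of_real \<beta>) * (complex_of_real \<beta> * cinner s2 s2)"
      unfolding s0_def using s1 s2 by (simp add: cinner_dsv cinner_smult_left cinner_smult_right)
    also have "\<dots> = complex_of_real (\<alpha>^2 + \<beta>^2)" using s1 s2 by (simp add: power2_eq_square)
    finally show "unit_vec_n (n1 + n2) s0" unfolding unit_vec_n_def s0_def using ab by simp
    fix \<sigma> assume "\<sigma> \<in> \<Sigma>"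
    then show "unitary_n (n1 + n2) (U \<sigma>)" unfolding U_def using qa1 qa2
      by (intro dsm_unitary) (auto simp: is_QA_def)
  next
    show "subspace_n (n1 + n2) (spanF (n1 + n2) b (m1 + m2))" by (rule spanF_subspace[OF ob])
  qed
  show "good \<Sigma> (dsA \<alpha> \<beta> A1 A2)" unfolding D using qa ob by simp
  assume w: "w \<in> omega_words \<Sigma>"
  have run: "nd_run s0 U w k = dsv n1 n2 (complex_of_real \<alpha> \<cdot>\<^sub>v nd_run s1 U1 w k) (complex_of_real \<beta> \<cdot>\<^sub>v nd_run s2 U2 w k)"
    for k
  proof (induction k)
    case 0 then show ?case unfolding s0_def by simp
  next
    case (Suc k)
    have wk: "w k \<in> \<Sigma>" using w unfolding omega_words_def by auto
    have c1: "U1 (w k) \<in> carrier_mat n1 n1" using qa1 wk unfolding is_QA_def unitary_n_def by auto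
    have c2: "U2 (w k) \<in> carrier_mat n2 n2" using qa2 wk unfolding is_QA_def unitary_n_def by auto
    have r1: "nd_run s1 U1 w k \<in> carrier_vec n1" using run_props[OF qa1 w] by auto
    have r2: "nd_run s2 U2 w k \<in> carrier_vec n2" using run_props[OF qa2 w] by auto
    show ?case using Suc c1 c2 r1 r2 unfolding U_def by (simp add: dsm_mult mult_mat_vec)
  qed
  have r1: "nd_run s1 U1 w k \<in> carrier_vec n1" using run_props[OF qa1 w] by auto
  have r2: "nd_run s2 U2 w k \<in> carrier_vec n2" using run_props[OF qa2 w] by auto
  have "Qseq (dsA \<alpha> \<beta> A1 A2) w k = Qf b (m1+m2) (nd_run s0 U w k)" unfolding D by simp
  also have "\<dots> = \<alpha>^2 * Qf b1 m1 (nd_run s1 U1 w k) + \<beta>^2 * Qf b2 m2 (nd_run s2 U2 w k)"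
    unfolding run b_def using r1 r2 bc1 bc2 by (simp add: Qf_dsv Qf_smult)
  also have "\<dots> = \<alpha>^2 * Qseq A1 w k + \<beta>^2 * Qseq A2 w k" unfolding A1 A2 by simp
  finally show "Qseq (dsA \<alpha> \<beta> A1 A2) w k = \<alpha>^2 * Qseq A1 w k + \<beta>^2 * Qseq A2 w k" .
qed

lemma crit_avg:
  assumes a: "\<forall>k. 0 \<le> a k" and b: "\<forall>k. 0 \<le> b k"
  shows "crit (\<lambda>k. (1/2) * a k + (1/2) * b k) 0 \<longleftrightarrow> crit a 0 \<or> crit b 0"
proof -
  have eq: "((1/2) * a k + (1/2) * b k > e) \<longleftrightarrow> (a k + b k > 2 * e)" for k e
    by (simp add: field_simps)
  show ?thesis
  proof
    assume "crit (\<lambda>k. (1/2) * a k + (1/2) * b k) 0"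
    then obtain \<epsilon> where ep: "\<epsilon> > 0" and inf: "infinite {k. a k + b k > 2 * \<epsilon>}"
      unfolding crit_def eq by auto
    have "{k. a k + b k > 2 * \<epsilon>} \<subseteq> {k. a k > \<epsilon>} \<union> {k. b k > \<epsilon>}" by auto
    then have "infinite {k. a k > \<epsilon>} \<or> infinite {k. b k > \<epsilon>}" using inf finite_subset by blast
    then show "crit a 0 \<or> crit b 0" unfolding crit_def using ep by auto
  next
    assume "crit a 0 \<or> crit b 0"
    then obtain \<epsilon> where ep: "\<epsilon> > 0" and inf: "infinite {k. a k > \<epsilon>} \<or> infinite {k. b k > \<epsilon>}"
      unfolding crit_def by auto
    define e2 where "e2 = \<epsilon> / 2"
    have e2: "e2 > 0" "2 * e2 = \<epsilon>" unfolding e2_def using ep by auto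
    have i1: "a k + b k > 2 * e2" if "a k > \<epsilon>" for k using that b[rule_format, of k] e2 by linarith
    have i2: "a k + b k > 2 * e2" if "b k > \<epsilon>" for k using that a[rule_format, of k] e2 by linarith
    have "{k. a k > \<epsilon>} \<subseteq> {k. a k + b k > 2 * e2}" "{k. b k > \<epsilon>} \<subseteq> {k. a k + b k > 2 * e2}"
      using i1 i2 by auto
    then have "infinite {k. a k + b k > 2 * e2}" using inf finite_subset by blast
    then show "crit (\<lambda>k. (1/2) * a k + (1/2) * b k) 0" unfolding crit_def eq using e2 by auto
  qed
qed

lemma part1:
  assumes fin: "finite \<Sigma>"
  shows "\<forall>L1 \<in> QBA_class \<Sigma> 0. \<forall>L2 \<in> QBA_class \<Sigma> 0. L1 \<union> L2 \<in> QBA_class \<Sigma> 0"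
proof (intro ballI)
  fix L1 L2 assume "L1 \<in> QBA_class \<Sigma> 0" "L2 \<in> QBA_class \<Sigma> 0"
  then obtain A1 A2 where g1: "good \<Sigma> A1" and L1: "L1 = langA \<Sigma> A1 0"
    and g2: "good \<Sigma> A2" and L2: "L2 = langA \<Sigma> A2 0" using class_good by metis
  define h where "h = sqrt (1/2::real)"
  have h: "0 \<le> h" "h^2 = 1/2" unfolding h_def by auto
  have hh: "h^2 + h^2 = 1" using h by simp
  define C where "C = dsA h h A1 A2"
  have gC: "good \<Sigma> C" unfolding C_def using dsA_props(1)[OF g1 g2 h(1) h(1) hh] .
  have QC: "Qseq C w = (\<lambda>k. (1/2) * Qseq A1 w k + (1/2) * Qseq A2 w k)" if "w \<in> omega_words \<Sigma>" for w
    unfolding C_def using dsA_props(2)[OF g1 g2 h(1) h(1) hh that] h(2) by auto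
  have "langA \<Sigma> C 0 = L1 \<union> L2"
    unfolding langA_crit[OF gC order_refl] L1 L2 langA_crit[OF g1 order_refl] langA_crit[OF g2 order_refl]
    using QC crit_avg Qseq_bounds[OF g1] Qseq_bounds[OF g2] by auto
  then show "L1 \<union> L2 \<in> QBA_class \<Sigma> 0" using langA_class[OF gC] by metis
qed

lemma sum_prod_split: "(\<Sum>i<(a::nat)*b. f i) = (\<Sum>x<a. \<Sum>y<b. f (x*b + y))"
proof (induction a)
  case 0 then show ?case by simp
next
  case (Suc a)
  have "(\<Sum>i<Suc a * b. f i) = (\<Sum>i<a * b + b. f i)" by (simp add: add.commute)
  also have "\<dots> = (\<Sum>i<a * b. f i) + (\<Sum>y<b. f (a * b + y))" by (rule sum_split_add)
  finally show ?case using Suc by simp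
qed

lemma divmod_simps: "y < b \<Longrightarrow> (x * b + y) div b = x" "y < b \<Longrightarrow> (x * b + y) mod (b::nat) = y"
  by auto

definition kv :: "nat \<Rightarrow> nat \<Rightarrow> complex vec \<Rightarrow> complex vec \<Rightarrow> complex vec" where
  "kv n1 n2 x y = vec (n1 * n2) (\<lambda>i. x $ (i div n2) * y $ (i mod n2))"

definition km :: "nat \<Rightarrow> nat \<Rightarrow> complex mat \<Rightarrow> complex mat \<Rightarrow> complex mat" where
  "km n1 n2 A B = mat (n1 * n2) (n1 * n2) (\<lambda>(i,j). A $$ (i div n2, j div n2) * B $$ (i mod n2, j mod n2))"

lemma kv_carrier[simp]: "kv n1 n2 x y \<in> carrier_vec (n1 * n2)" unfolding kv_def by simp
lemma kv_dim[simp]: "dim_vec (kv n1 n2 x y) = n1 * n2" unfolding kv_def by simp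

lemma idx_bounds:
  assumes "i < n1 * (n2::nat)" shows "i div n2 < n1" "i mod n2 < n2"
proof -
  have "n2 > 0" using assms by (cases n2) auto
  then show "i mod n2 < n2" by simp
  show "i div n2 < n1" using assms by (simp add: less_mult_imp_div_less)
qed

lemma km_mult:
  assumes A: "A \<in> carrier_mat n1 n1" and B: "B \<in> carrier_mat n2 n2"
    and x: "x \<in> carrier_vec n1" and y: "y \<in> carrier_vec n2"
  shows "km n1 n2 A B *\<^sub>v kv n1 n2 x y = kv n1 n2 (A *\<^sub>v x) (B *\<^sub>v y)"
proof (rule eq_vecI)
  fix i assume "i < dim_vec (kv n1 n2 (A *\<^sub>v x) (B *\<^sub>v y))"
  then have i: "i < n1 * n2" by simp
  note ib = idx_bounds[OF i]
  have "(km n1 n2 A B *\<^sub>v kv n1 n2 x y) $ i = (\<Sum>j<n1*n2. km n1 n2 A B $$ (i,j) * kv n1 n2 x y $ j)"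
    using i by (subst mv_index) (auto simp: km_def)
  also have "\<dots> = (\<Sum>p<n1. \<Sum>q<n2. km n1 n2 A B $$ (i,p*n2+q) * kv n1 n2 x y $ (p*n2+q))"
    by (rule sum_prod_split)
  also have "\<dots> = (\<Sum>p<n1. \<Sum>q<n2. (A $$ (i div n2, p) * x $ p) * (B $$ (i mod n2, q) * y $ q))"
  proof (intro sum.cong refl)
    fix p q assume p: "p \<in> {..<n1}" and q: "q \<in> {..<n2}"
    have pq: "p * n2 + q < n1 * n2"
    proof -
      have "p * n2 + q < p * n2 + n2" using q by simp
      also have "\<dots> = Suc p * n2" by simp
      also have "\<dots> \<le> n1 * n2" using p by (intro mult_right_mono) auto
      finally show ?thesis .
    qed
    show "km n1 n2 A B $$ (i, p * n2 + q) * kv n1 n2 x y $ (p * n2 + q) =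
        A $$ (i div n2, p) * x $ p * (B $$ (i mod n2, q) * y $ q)"
      using pq i q by (simp add: km_def kv_def divmod_simps)
  qed
  also have "\<dots> = (\<Sum>p<n1. A $$ (i div n2, p) * x $ p) * (\<Sum>q<n2. B $$ (i mod n2, q) * y $ q)"
    by (simp add: sum_product)
  also have "\<dots> = (A *\<^sub>v x) $ (i div n2) * (B *\<^sub>v y) $ (i mod n2)"
  proof -
    have h1: "(A *\<^sub>v x) $ (i div n2) = (\<Sum>p<n1. A $$ (i div n2, p) * x $ p)"
      using A x ib by (subst mv_index) auto
    have h2: "(B *\<^sub>v y) $ (i mod n2) = (\<Sum>q<n2. B $$ (i mod n2, q) * y $ q)"
      using B y ib by (subst mv_index) auto
    show ?thesis by (simp only: h1 h2)
  qed
  finally show "(km n1 n2 A B *\<^sub>v kv n1 n2 x y) $ i = kv n1 n2 (A *\<^sub>v x) (B *\<^sub>v y) $ i"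
    using i by (simp add: kv_def)
qed (simp add: km_def)

lemma pq_bound:
  assumes p: "p < n1" and q: "q < (n2::nat)" shows "p * n2 + q < n1 * n2"
proof -
  have "p * n2 + q < p * n2 + n2" using q by simp
  also have "\<dots> = Suc p * n2" by simp
  also have "\<dots> \<le> n1 * n2" using p by (intro mult_right_mono) auto
  finally show ?thesis .
qed

lemma cinner_kv:
  assumes "dim_vec x' = n1" "dim_vec y' = n2"
  shows "cinner (kv n1 n2 x y) (kv n1 n2 x' y') = cinner x x' * cinner y y'"
proof -
  have "cinner (kv n1 n2 x y) (kv n1 n2 x' y') =
     (\<Sum>p<n1. \<Sum>q<n2. cnj (kv n1 n2 x y $ (p*n2+q)) * kv n1 n2 x' y' $ (p*n2+q))"
    unfolding cinner_def kv_dim by (rule sum_prod_split)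
  also have "\<dots> = (\<Sum>p<n1. \<Sum>q<n2. (cnj (x $ p) * x' $ p) * (cnj (y $ q) * y' $ q))"
    by (intro sum.cong refl) (auto simp: kv_def pq_bound divmod_simps)
  also have "\<dots> = cinner x x' * cinner y y'"
    unfolding cinner_def using assms by (simp add: sum_product)
  finally show ?thesis .
qed

lemma km_unitary:
  assumes A: "unitary_n n1 A" and B: "unitary_n n2 B"
  shows "unitary_n (n1 * n2) (km n1 n2 A B)"
proof (rule unitary_by_cols)
  show "km n1 n2 A B \<in> carrier_mat (n1 * n2) (n1 * n2)" unfolding km_def by simp
  fix k l assume k: "k < n1 * n2" and l: "l < n1 * n2"
  note kb = idx_bounds[OF k] and lb = idx_bounds[OF l]
  let ?K = "km n1 n2 A B"
  have "(\<Sum>i<n1*n2. cnj (?K $$ (i,k)) * ?K $$ (i,l)) =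
      (\<Sum>p<n1. \<Sum>q<n2. cnj (?K $$ (p*n2+q,k)) * ?K $$ (p*n2+q,l))"
    by (rule sum_prod_split)
  also have "\<dots> = (\<Sum>p<n1. \<Sum>q<n2. (cnj (A $$ (p, k div n2)) * A $$ (p, l div n2)) *
        (cnj (B $$ (q, k mod n2)) * B $$ (q, l mod n2)))"
    using k l by (intro sum.cong refl) (auto simp: km_def pq_bound divmod_simps)
  also have "\<dots> = (\<Sum>p<n1. cnj (A $$ (p, k div n2)) * A $$ (p, l div n2)) *
        (\<Sum>q<n2. cnj (B $$ (q, k mod n2)) * B $$ (q, l mod n2))"
    by (simp add: sum_product)
  also have "\<dots> = (if k div n2 = l div n2 then 1 else 0) * (if k mod n2 = l mod n2 then 1 else 0)"
    using unit_cols[OF A kb(1) lb(1)] unit_cols[OF B kb(2) lb(2)] by simp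
  also have "\<dots> = (if k = l then 1 else 0)"
    using div_mult_mod_eq[of k n2] div_mult_mod_eq[of l n2] by (auto, metis)
  finally show "(\<Sum>i<n1*n2. cnj (?K $$ (i,k)) * ?K $$ (i,l)) = (if k = l then 1 else 0)" .
qed

fun tsA :: "'a ona \<Rightarrow> 'a ona \<Rightarrow> 'a ona" where
  "tsA (n1, s1, U1, b1, m1) (n2, s2, U2, b2, m2) =
    (n1 * n2, kv n1 n2 s1 s2, (\<lambda>\<sigma>. km n1 n2 (U1 \<sigma>) (U2 \<sigma>)),
     (\<lambda>j. kv n1 n2 (b1 (j div m2)) (b2 (j mod m2))), m1 * m2)"

lemma tsA_props:
  assumes g1: "good \<Sigma> A1" and g2: "good \<Sigma> A2"
  shows "good \<Sigma> (tsA A1 A2)"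
    and "w \<in> omega_words \<Sigma> \<Longrightarrow> Qseq (tsA A1 A2) w k = Qseq A1 w k * Qseq A2 w k"
proof -
  obtain n1 s1 U1 b1 m1 where A1: "A1 = (n1, s1, U1, b1, m1)" by (cases A1) auto
  obtain n2 s2 U2 b2 m2 where A2: "A2 = (n2, s2, U2, b2, m2)" by (cases A2) auto
  have qa1: "is_QA \<Sigma> n1 s1 U1 (spanF n1 b1 m1)" and ob1: "onf n1 b1 m1" using g1 A1 by auto
  have qa2: "is_QA \<Sigma> n2 s2 U2 (spanF n2 b2 m2)" and ob2: "onf n2 b2 m2" using g2 A2 by auto
  have bc1: "\<forall>j<m1. b1 j \<in> carrier_vec n1" and bc2: "\<forall>j<m2. b2 j \<in> carrier_vec n2"
    using ob1 ob2 unfolding onf_def by auto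
  have s1: "s1 \<in> carrier_vec n1" "cinner s1 s1 = 1" and s2: "s2 \<in> carrier_vec n2" "cinner s2 s2 = 1"
    using qa1 qa2 unfolding is_QA_def unit_vec_n_def by auto
  define b where "b = (\<lambda>j. kv n1 n2 (b1 (j div m2)) (b2 (j mod m2)))"
  define s0 where "s0 = kv n1 n2 s1 s2"
  define U where "U = (\<lambda>\<sigma>. km n1 n2 (U1 \<sigma>) (U2 \<sigma>))"
  have D: "tsA A1 A2 = (n1 * n2, s0, U, b, m1 * m2)"
    unfolding A1 A2 b_def s0_def U_def by simp
  have ob: "onf (n1 * n2) b (m1 * m2)" unfolding onf_def
  proof (intro conjI allI impI)
    fix j assume "j < m1 * m2" then show "b j \<in> carrier_vec (n1 * n2)" unfolding b_def by simp
  next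
    fix j k assume j: "j < m1 * m2" and k: "k < m1 * m2"
    note jb = idx_bounds[OF j] and kb = idx_bounds[OF k]
    have "cinner (b j) (b k) = cinner (b1 (j div m2)) (b1 (k div m2)) * cinner (b2 (j mod m2)) (b2 (k mod m2))"
      unfolding b_def using bc1 bc2 kb by (simp add: cinner_kv)
    also have "\<dots> = (if j div m2 = k div m2 then 1 else 0) * (if j mod m2 = k mod m2 then 1 else 0)"
      using ob1 ob2 jb kb unfolding onf_def by simp
    also have "\<dots> = (if j = k then 1 else 0)"
      using div_mult_mod_eq[of j m2] div_mult_mod_eq[of k m2] by (auto, metis)
    finally show "cinner (b j) (b k) = (if j = k then 1 else 0)" .
  qed
  have qa: "is_QA \<Sigma> (n1 * n2) s0 U (spanF (n1 * n2) b (m1 * m2))" unfolding is_QA_def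
  proof (intro conjI ballI)
    show "finite \<Sigma>" using qa1 unfolding is_QA_def by auto
    show "unit_vec_n (n1 * n2) s0" unfolding unit_vec_n_def s0_def using s1 s2 by (simp add: cinner_kv)
    fix \<sigma> assume "\<sigma> \<in> \<Sigma>"
    then show "unitary_n (n1 * n2) (U \<sigma>)" unfolding U_def using qa1 qa2
      by (intro km_unitary) (auto simp: is_QA_def)
  next
    show "subspace_n (n1 * n2) (spanF (n1 * n2) b (m1 * m2))" by (rule spanF_subspace[OF ob])
  qed
  show "good \<Sigma> (tsA A1 A2)" unfolding D using qa ob by simp
  assume w: "w \<in> omega_words \<Sigma>"
  have run: "nd_run s0 U w k = kv n1 n2 (nd_run s1 U1 w k) (nd_run s2 U2 w k)" for k
  proof (induction k)
    case 0 then show ?case unfolding s0_def by simp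
  next
    case (Suc k)
    have wk: "w k \<in> \<Sigma>" using w unfolding omega_words_def by auto
    have c1: "U1 (w k) \<in> carrier_mat n1 n1" using qa1 wk unfolding is_QA_def unitary_n_def by auto
    have c2: "U2 (w k) \<in> carrier_mat n2 n2" using qa2 wk unfolding is_QA_def unitary_n_def by auto
    have r1: "nd_run s1 U1 w k \<in> carrier_vec n1" using run_props[OF qa1 w] by auto
    have r2: "nd_run s2 U2 w k \<in> carrier_vec n2" using run_props[OF qa2 w] by auto
    show ?case using Suc c1 c2 r1 r2 unfolding U_def by (simp add: km_mult)
  qed
  have r1: "nd_run s1 U1 w k \<in> carrier_vec n1" using run_props[OF qa1 w] by auto
  have r2: "nd_run s2 U2 w k \<in> carrier_vec n2" using run_props[OF qa2 w] by auto
  have "Qseq (tsA A1 A2) w k = Qf b (m1 * m2) (nd_run s0 U w k)" unfolding D by simp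
  also have "\<dots> = (\<Sum>p<m1. \<Sum>q<m2. (cmod (cinner (b (p*m2+q)) (nd_run s0 U w k)))^2)"
    unfolding Qf_def by (rule sum_prod_split)
  also have "\<dots> = (\<Sum>p<m1. \<Sum>q<m2. (cmod (cinner (b1 p) (nd_run s1 U1 w k)))^2 *
       (cmod (cinner (b2 q) (nd_run s2 U2 w k)))^2)"
    using r1 r2 by (intro sum.cong refl) (auto simp: b_def run cinner_kv divmod_simps norm_mult power_mult_distrib)
  also have "\<dots> = Qf b1 m1 (nd_run s1 U1 w k) * Qf b2 m2 (nd_run s2 U2 w k)"
    unfolding Qf_def by (simp add: sum_product)
  also have "\<dots> = Qseq A1 w k * Qseq A2 w k" unfolding A1 A2 by simp
  finally show "Qseq (tsA A1 A2) w k = Qseq A1 w k * Qseq A2 w k" .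
qed

definition e1 :: "complex vec" where "e1 = vec 1 (\<lambda>_. 1)"

lemma e1_facts: "e1 \<in> carrier_vec 1" "cinner e1 e1 = 1"
  unfolding e1_def cinner_def by auto

lemma one1_unitary: "unitary_n 1 (1\<^sub>m 1)"
  by (rule unitary_by_cols) auto

definition oneA :: "'a ona" where "oneA = (1, e1, \<lambda>_. 1\<^sub>m 1, \<lambda>_. e1, 1)"
definition zeroA :: "'a ona" where "zeroA = (1, e1, \<lambda>_. 1\<^sub>m 1, \<lambda>_. e1, 0)"

lemma run_one: "nd_run e1 (\<lambda>_. 1\<^sub>m 1) w k = e1"
proof (induction k)
  case 0 show ?case by (simp only: nd_run.simps)
next
  case (Suc k)
  have h: "1\<^sub>m 1 *\<^sub>v e1 = e1" by (rule one_mult_mat_vec[OF e1_facts(1)])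
  show ?case by (simp only: nd_run.simps Suc h)
qed

lemma oneA_props: "finite \<Sigma> \<Longrightarrow> good \<Sigma> oneA" "Qseq oneA w k = 1"
proof -
  have ob: "onf 1 (\<lambda>_. e1) 1" unfolding onf_def using e1_facts by auto
  assume "finite \<Sigma>"
  then show "good \<Sigma> oneA" unfolding oneA_def using ob e1_facts one1_unitary spanF_subspace[OF ob]
    by (auto simp: is_QA_def unit_vec_n_def)
next
  show "Qseq oneA w k = 1" unfolding oneA_def Qseq.simps run_one by (simp add: Qf_def e1_facts)
qed

lemma zeroA_props: "finite \<Sigma> \<Longrightarrow> good \<Sigma> zeroA" "Qseq zeroA w k = 0"
proof -
  have ob: "onf 1 (\<lambda>_. e1) 0" unfolding onf_def by auto
  assume "finite \<Sigma>"
  then show "good \<Sigma> zeroA" unfolding zeroA_def using ob e1_facts one1_unitary spanF_subspace[OF ob]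
    by (auto simp: is_QA_def unit_vec_n_def)
next
  show "Qseq zeroA w k = 0" unfolding zeroA_def by (simp add: Qf_def)
qed

definition constA :: "real \<Rightarrow> 'a ona" where
  "constA x = dsA (sqrt x) (sqrt (1 - x)) oneA zeroA"

lemma constA_props:
  assumes "finite \<Sigma>" "0 \<le> x" "x \<le> 1"
  shows "good \<Sigma> (constA x)" "w \<in> omega_words \<Sigma> \<Longrightarrow> Qseq (constA x) w k = x"
proof -
  have s: "0 \<le> sqrt x" "0 \<le> sqrt (1 - x)" "(sqrt x)^2 + (sqrt (1 - x))^2 = 1" using assms by auto
  show "good \<Sigma> (constA x)" unfolding constA_def
    by (rule dsA_props(1)[OF oneA_props(1)[OF assms(1)] zeroA_props(1)[OF assms(1)] s])
  assume w: "w \<in> omega_words \<Sigma>"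
  show "Qseq (constA x) w k = x" unfolding constA_def
    using dsA_props(2)[OF oneA_props(1)[OF assms(1)] zeroA_props(1)[OF assms(1)] s w] assms
    by (simp add: oneA_props(2) zeroA_props(2))
qed

primrec tpA :: "'a ona \<Rightarrow> nat \<Rightarrow> 'a ona" where
  "tpA A 0 = oneA"
| "tpA A (Suc k) = tsA A (tpA A k)"

lemma good_finite: "good \<Sigma> A \<Longrightarrow> finite \<Sigma>"
  by (cases A) (auto simp: is_QA_def)

lemma tpA_props:
  assumes g: "good \<Sigma> A"
  shows "good \<Sigma> (tpA A K)" "w \<in> omega_words \<Sigma> \<Longrightarrow> Qseq (tpA A K) w k = (Qseq A w k)^K"
proof -
  have gK: "good \<Sigma> (tpA A K)" for K
    by (induction K) (auto intro: tsA_props(1)[OF g] oneA_props(1)[OF good_finite[OF g]])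
  then show "good \<Sigma> (tpA A K)" .
  assume w: "w \<in> omega_words \<Sigma>"
  show "Qseq (tpA A K) w k = (Qseq A w k)^K"
    by (induction K) (auto simp: oneA_props(2) tsA_props(2)[OF g gK w])
qed

lemma pow_diff_le:
  fixes x y :: real
  assumes "0 \<le> y" "y \<le> x" "x \<le> 1"
  shows "x^K - y^K \<le> real K * (x - y)"
proof (induction K)
  case 0 then show ?case by simp
next
  case (Suc K)
  have yK: "y^K \<le> 1" using assms by (intro power_le_one) auto
  have d0: "0 \<le> x^K - y^K" using assms by (simp add: power_mono)
  have "x^Suc K - y^Suc K = x * (x^K - y^K) + y^K * (x - y)" by (simp add: algebra_simps)
  also have "x * (x^K - y^K) \<le> 1 * (real K * (x - y))"
    using Suc assms d0 by (intro mult_mono) auto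
  also have "y^K * (x - y) \<le> 1 * (x - y)" using yK assms by (intro mult_right_mono) auto
  finally show ?case by (simp add: algebra_simps)
qed

definition Gf :: "real \<Rightarrow> nat \<Rightarrow> (nat \<Rightarrow> real) \<Rightarrow> (nat \<Rightarrow> real) \<Rightarrow> nat \<Rightarrow> real" where
  "Gf lam K a b n = (1 - lam) * ((1/2) * a n ^ K + (1/2) * b n ^ K) + lam * (1 - (1 - lam) * lam ^ (K - 1))"

lemma Gf_alt: "K \<ge> 1 \<Longrightarrow> Gf lam K a b n = lam + (1 - lam) * ((1/2) * a n ^ K + (1/2) * b n ^ K - lam ^ K)"
  by (cases K) (auto simp: Gf_def algebra_simps)

lemma Gf_sym: "Gf lam K a b = Gf lam K b a"
  by (rule ext) (simp add: Gf_def add.commute)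

lemma crit_G_upper:
  assumes lam: "0 < lam" "lam < 1" and K: "K \<ge> 1"
    and a: "\<forall>n. 0 \<le> a n" and b: "\<forall>n. 0 \<le> b n"
    and na: "\<not> crit a lam" and nb: "\<not> crit b lam"
  shows "\<not> crit (Gf lam K a b) lam"
proof
  assume "crit (Gf lam K a b) lam"
  then obtain \<epsilon> where ep: "\<epsilon> > 0" and inf: "infinite {n. Gf lam K a b n > lam + \<epsilon>}"
    unfolding crit_def by auto
  define \<eta> where "\<eta> = min (1 - lam) (\<epsilon> / real K)"
  have eta1: "\<eta> > 0" "\<eta> \<le> 1 - lam" unfolding \<eta>_def using lam ep K by auto
  have "real K * \<eta> \<le> real K * (\<epsilon> / real K)" unfolding \<eta>_def by (intro mult_left_mono) auto
  then have eta2: "real K * \<eta> \<le> \<epsilon>" using K by simp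
  have fa: "finite {n. a n > lam + \<eta>}" using na eta1 unfolding crit_def by auto
  have fb: "finite {n. b n > lam + \<eta>}" using nb eta1 unfolding crit_def by auto
  have sub: "{n. Gf lam K a b n > lam + \<epsilon>} \<subseteq> {n. a n > lam + \<eta>} \<union> {n. b n > lam + \<eta>}"
  proof (rule subsetI, rule ccontr)
    fix n assume g: "n \<in> {n. Gf lam K a b n > lam + \<epsilon>}"
      and "n \<notin> {n. a n > lam + \<eta>} \<union> {n. b n > lam + \<eta>}"
    then have an: "a n \<le> lam + \<eta>" and bn: "b n \<le> lam + \<eta>" by auto
    have pa: "a n ^ K \<le> (lam + \<eta>)^K" using a an by (intro power_mono) auto
    have pb: "b n ^ K \<le> (lam + \<eta>)^K" using b bn by (intro power_mono) auto
    define Y where "Y = (1/2) * a n ^ K + (1/2) * b n ^ K - lam ^ K"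
    have "Y \<le> (lam + \<eta>)^K - lam^K" unfolding Y_def using pa pb by linarith
    also have "\<dots> \<le> real K * \<eta>" using pow_diff_le[of lam "lam + \<eta>" K] lam eta1 by auto
    finally have Y1: "Y \<le> real K * \<eta>" .
    have Y2: "(1 - lam) * Y \<le> (1 - lam) * (real K * \<eta>)" by (rule mult_left_mono) (use Y1 lam in auto)
    have Y3: "(1 - lam) * (real K * \<eta>) \<le> real K * \<eta>"
      by (rule mult_left_le_one_le) (use lam eta1 in auto)
    have G1: "Gf lam K a b n = lam + (1 - lam) * Y" unfolding Y_def by (rule Gf_alt[OF K])
    have "Gf lam K a b n \<le> lam + \<epsilon>" using G1 Y2 Y3 eta2 by linarith
    then show False using g by auto
  qed
  then have "finite {n. Gf lam K a b n > lam + \<epsilon>}" using fa fb finite_subset by blast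
  with inf show False by simp
qed

lemma crit_G_lower:
  assumes lam: "0 < lam" "lam < 1" and a: "\<forall>n. 0 \<le> a n" and b: "\<forall>n. 0 \<le> b n" and ca: "crit a lam"
  shows "\<exists>K0. \<forall>K \<ge> K0. crit (Gf lam K a b) lam"
proof -
  obtain \<epsilon> where ep: "\<epsilon> > 0" and inf: "infinite {n. a n > lam + \<epsilon>}" using ca unfolding crit_def by auto
  define x where "x = (lam + \<epsilon>) / lam"
  have x1: "1 < x" unfolding x_def using lam ep by (simp add: field_simps)
  obtain K0 where K0: "2 < x ^ K0" using real_arch_pow[OF x1] by blast
  show ?thesis
  proof (intro exI[of _ "Suc K0"] allI impI)
    fix K assume K: "Suc K0 \<le> K"
    have K1: "K \<ge> 1" using K by simp
    have "x ^ K0 \<le> x ^ K" using x1 K by (intro power_increasing) auto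
    then have "2 < x ^ K" using K0 by linarith
    moreover have "x ^ K = (lam + \<epsilon>)^K / lam^K" unfolding x_def by (simp add: power_divide)
    ultimately have big: "2 * lam ^ K < (lam + \<epsilon>) ^ K" using lam by (simp add: field_simps)
    define \<delta> where "\<delta> = (1 - lam) * ((1/2) * (lam + \<epsilon>)^K - lam^K)"
    have "0 < (1/2) * (lam + \<epsilon>)^K - lam^K" using big by simp
    then have dpos: "\<delta> > 0" unfolding \<delta>_def using lam by simp
    have sub: "{n. a n > lam + \<epsilon>} \<subseteq> {n. Gf lam K a b n > lam + \<delta>}"
    proof
      fix n assume "n \<in> {n. a n > lam + \<epsilon>}"
      then have an: "a n > lam + \<epsilon>" by simp
      have p: "(lam + \<epsilon>)^K < a n ^ K" using an lam ep K1 by (intro power_strict_mono) auto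
      have bK: "0 \<le> b n ^ K" using b by simp
      have Y: "(1/2) * (lam + \<epsilon>)^K - lam^K < (1/2) * a n ^ K + (1/2) * b n ^ K - lam ^ K"
        using p bK by linarith
      have "(1 - lam) * ((1/2) * (lam + \<epsilon>)^K - lam^K) < (1 - lam) * ((1/2) * a n ^ K + (1/2) * b n ^ K - lam ^ K)"
        by (rule mult_strict_left_mono) (use Y lam in auto)
      then show "n \<in> {n. Gf lam K a b n > lam + \<delta>}" using Gf_alt[OF K1, of lam a b n] unfolding \<delta>_def by simp
    qed
    then have "infinite {n. Gf lam K a b n > lam + \<delta>}" using inf finite_subset by blast
    then show "crit (Gf lam K a b) lam" unfolding crit_def using dpos by blast
  qed
qed

lemma part2:
  assumes lam: "0 < lam" "lam < 1" and L1: "L1 \<in> QBA_class \<Sigma> lam" and L2: "L2 \<in> QBA_class \<Sigma> lam"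
  shows "\<exists>L :: nat \<Rightarrow> (nat \<Rightarrow> 'a) set. (\<forall>k. L k \<in> QBA_class \<Sigma> lam) \<and> set_lim_is L (L1 \<union> L2)"
proof -
  obtain A1 where g1: "good \<Sigma> A1" and L1e: "L1 = langA \<Sigma> A1 lam" using class_good[OF L1] by blast
  obtain A2 where g2: "good \<Sigma> A2" and L2e: "L2 = langA \<Sigma> A2 lam" using class_good[OF L2] by blast
  have fin: "finite \<Sigma>" using good_finite[OF g1] .
  define h where "h = sqrt (1/2::real)"
  have h: "0 \<le> h" "h^2 = 1/2" "h^2 + h^2 = 1" unfolding h_def by auto
  have sl: "0 \<le> sqrt (1 - lam)" "0 \<le> sqrt lam" "(sqrt (1 - lam))^2 + (sqrt lam)^2 = 1" using lam by auto
  define c where "c = (\<lambda>k::nat. 1 - (1 - lam) * lam ^ k)"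
  have c: "0 \<le> c k" "c k \<le> 1" for k
  proof -
    have "lam ^ k \<le> 1" using lam by (intro power_le_one) auto
    then have "(1 - lam) * lam ^ k \<le> 1" using lam by (intro mult_le_one) auto
    moreover have "0 \<le> (1 - lam) * lam ^ k" using lam by simp
    ultimately show "0 \<le> c k" "c k \<le> 1" unfolding c_def by auto
  qed
  define D where "D = (\<lambda>k. dsA h h (tpA A1 (Suc k)) (tpA A2 (Suc k)))"
  define C where "C = (\<lambda>k. dsA (sqrt (1 - lam)) (sqrt lam) (D k) (constA (c k)))"
  have gD: "good \<Sigma> (D k)" for k
    unfolding D_def by (rule dsA_props(1)[OF tpA_props(1)[OF g1] tpA_props(1)[OF g2] h(1) h(1) h(3)])
  have gC: "good \<Sigma> (C k)" for k
    unfolding C_def by (rule dsA_props(1)[OF gD constA_props(1)[OF fin c] sl])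
  have QC: "Qseq (C k) w = Gf lam (Suc k) (Qseq A1 w) (Qseq A2 w)" if w: "w \<in> omega_words \<Sigma>" for k w
  proof (rule ext)
    fix n
    have "Qseq (C k) w n = (sqrt (1 - lam))^2 * Qseq (D k) w n + (sqrt lam)^2 * Qseq (constA (c k)) w n"
      unfolding C_def by (rule dsA_props(2)[OF gD constA_props(1)[OF fin c] sl w])
    also have "Qseq (D k) w n = h^2 * (Qseq A1 w n)^(Suc k) + h^2 * (Qseq A2 w n)^(Suc k)"
    proof -
      have "Qseq (D k) w n = h^2 * Qseq (tpA A1 (Suc k)) w n + h^2 * Qseq (tpA A2 (Suc k)) w n"
        unfolding D_def by (rule dsA_props(2)[OF tpA_props(1)[OF g1] tpA_props(1)[OF g2] h(1) h(1) h(3) w])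
      then show ?thesis by (simp only: tpA_props(2)[OF g1 w] tpA_props(2)[OF g2 w])
    qed
    also have "Qseq (constA (c k)) w n = c k" by (rule constA_props(2)[OF fin c w])
    also have "(sqrt (1 - lam))^2 * (h^2 * (Qseq A1 w n)^(Suc k) + h^2 * (Qseq A2 w n)^(Suc k)) + (sqrt lam)^2 * c k
        = Gf lam (Suc k) (Qseq A1 w) (Qseq A2 w) n"
      unfolding Gf_def c_def h(2) using lam by simp
    finally show "Qseq (C k) w n = Gf lam (Suc k) (Qseq A1 w) (Qseq A2 w) n" .
  qed
  define L where "L = (\<lambda>k. langA \<Sigma> (C k) lam)"
  have lam0: "0 \<le> lam" using lam by simp
  have Lk: "w \<in> L k \<longleftrightarrow> w \<in> omega_words \<Sigma> \<and> crit (Gf lam (Suc k) (Qseq A1 w) (Qseq A2 w)) lam" for k w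
    unfolding L_def langA_crit[OF gC lam0] using QC by auto
  have L1c: "w \<in> L1 \<longleftrightarrow> w \<in> omega_words \<Sigma> \<and> crit (Qseq A1 w) lam" for w
    unfolding L1e langA_crit[OF g1 lam0] by simp
  have L2c: "w \<in> L2 \<longleftrightarrow> w \<in> omega_words \<Sigma> \<and> crit (Qseq A2 w) lam" for w
    unfolding L2e langA_crit[OF g2 lam0] by simp
  have nn1: "\<forall>n. 0 \<le> Qseq A1 w n" if "w \<in> omega_words \<Sigma>" for w using Qseq_bounds[OF g1 that] by auto
  have nn2: "\<forall>n. 0 \<le> Qseq A2 w n" if "w \<in> omega_words \<Sigma>" for w using Qseq_bounds[OF g2 that] by auto
  have up: "w \<in> L1 \<union> L2" if "w \<in> L k" for w k
  proof -
    have w: "w \<in> omega_words \<Sigma>" and cr: "crit (Gf lam (Suc k) (Qseq A1 w) (Qseq A2 w)) lam"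
      using that Lk by auto
    have "crit (Qseq A1 w) lam \<or> crit (Qseq A2 w) lam"
      using crit_G_upper[OF lam _ nn1[OF w] nn2[OF w]] cr by auto
    then show ?thesis using w L1c L2c by auto
  qed
  have low: "\<exists>K0. \<forall>k \<ge> K0. w \<in> L k" if "w \<in> L1 \<union> L2" for w
  proof -
    have w: "w \<in> omega_words \<Sigma>" using that L1c L2c by auto
    have "\<exists>K0. \<forall>K \<ge> K0. crit (Gf lam K (Qseq A1 w) (Qseq A2 w)) lam"
    proof (cases "w \<in> L1")
      case True
      then show ?thesis using crit_G_lower[OF lam nn1[OF w] nn2[OF w]] L1c by auto
    next
      case False
      then have "crit (Qseq A2 w) lam" using that L2c by auto
      then show ?thesis using crit_G_lower[OF lam nn2[OF w] nn1[OF w]] Gf_sym by metis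
    qed
    then obtain K0 where K0: "\<forall>K \<ge> K0. crit (Gf lam K (Qseq A1 w) (Qseq A2 w)) lam" by blast
    have "w \<in> L k" if "k \<ge> K0" for k using K0 that w Lk by auto
    then show ?thesis by blast
  qed
  have "set_liminf L = L1 \<union> L2"
  proof
    show "set_liminf L \<subseteq> L1 \<union> L2"
    proof
      fix w assume "w \<in> set_liminf L"
      then obtain k where "\<And>j. j \<ge> k \<Longrightarrow> w \<in> L j" unfolding set_liminf_def by auto
      then have "w \<in> L k" by simp
      then show "w \<in> L1 \<union> L2" by (rule up)
    qed
    show "L1 \<union> L2 \<subseteq> set_liminf L"
    proof
      fix w assume "w \<in> L1 \<union> L2"
      then obtain K0 where "\<forall>k \<ge> K0. w \<in> L k" using low by blast
      then show "w \<in> set_liminf L" unfolding set_liminf_def by auto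
    qed
  qed
  moreover have "set_limsup L = L1 \<union> L2"
  proof
    show "set_limsup L \<subseteq> L1 \<union> L2"
    proof
      fix w assume "w \<in> set_limsup L"
      then obtain j where "w \<in> L j" unfolding set_limsup_def by auto
      then show "w \<in> L1 \<union> L2" by (rule up)
    qed
    show "L1 \<union> L2 \<subseteq> set_limsup L"
    proof
      fix w assume "w \<in> L1 \<union> L2"
      then obtain K0 where K0: "\<forall>k \<ge> K0. w \<in> L k" using low by blast
      show "w \<in> set_limsup L" unfolding set_limsup_def
      proof (intro InterI, clarify)
        fix k show "w \<in> (\<Union>j\<in>{k..}. L j)" using K0 by (intro UN_I[of "max k K0"]) auto
      qed
    qed
  qed
  moreover have "\<forall>k. L k \<in> QBA_class \<Sigma> lam" unfolding L_def using langA_class[OF gC] by blast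
  ultimately show ?thesis unfolding set_lim_is_def by blast
qed


lemma conj2:
  "\<forall>lam::real. 0 < lam \<and> lam < 1 \<longrightarrow>
       (\<forall>L1 \<in> QBA_class \<Sigma> lam. \<forall>L2 \<in> QBA_class \<Sigma> lam.
          \<exists>L :: nat \<Rightarrow> (nat \<Rightarrow> 'a) set. (\<forall>k. L k \<in> QBA_class \<Sigma> lam) \<and> set_lim_is L (L1 \<union> L2))"
proof (intro allI impI ballI)
  fix lam :: real and L1 L2
  assume "0 < lam \<and> lam < 1" "L1 \<in> QBA_class \<Sigma> lam" "L2 \<in> QBA_class \<Sigma> lam"
  then show "\<exists>L :: nat \<Rightarrow> (nat \<Rightarrow> 'a) set. (\<forall>k. L k \<in> QBA_class \<Sigma> lam) \<and> set_lim_is L (L1 \<union> L2)"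
    using part2[of lam L1 \<Sigma> L2] by blast
qed

lemma conj3:
  "\<forall>lam::real. 0 < lam \<and> lam < 1 \<longrightarrow>
       (\<exists>(\<Gamma> :: nat set) (L :: nat \<Rightarrow> (nat \<Rightarrow> nat) set) X. finite \<Gamma> \<and>
          (\<forall>k. L k \<in> QBA_class \<Gamma> lam) \<and> set_lim_is L X \<and> X \<notin> QBA_class \<Gamma> lam)"
proof (intro allI impI)
  fix lam :: real assume "0 < lam \<and> lam < 1"
  then show "\<exists>(\<Gamma> :: nat set) (L :: nat \<Rightarrow> (nat \<Rightarrow> nat) set) X. finite \<Gamma> \<and>
          (\<forall>k. L k \<in> QBA_class \<Gamma> lam) \<and> set_lim_is L X \<and> X \<notin> QBA_class \<Gamma> lam"
    using part3[of lam] by simp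
qed

lemma conj4:
  "\<forall>lam::real. 0 \<le> lam \<and> lam < 1 \<longrightarrow>
       (\<exists>(\<Gamma> :: nat set) L. finite \<Gamma> \<and> L \<in> QBA_class \<Gamma> lam \<and>
          omega_words \<Gamma> - L \<notin> QBA_class \<Gamma> lam)"
  using part4 by blast

lemma conj5:
  "\<forall>lam::real. 0 \<le> lam \<and> lam < 1 \<longrightarrow>
       (\<exists>(\<Gamma> :: nat set) L1 L2. finite \<Gamma> \<and> L1 \<in> QBA_class \<Gamma> lam \<and> L2 \<in> QBA_class \<Gamma> lam \<and>
          L1 \<inter> L2 \<notin> QBA_class \<Gamma> lam)"
  using part5 by blast

theorem theorem10:
  fixes \<Sigma> :: "'a set"
  assumes "finite \<Sigma>"
  shows
   "(\<forall>L1 \<in> QBA_class \<Sigma> 0. \<forall>L2 \<in> QBA_class \<Sigma> 0. L1 \<union> L2 \<in> QBA_class \<Sigma> 0)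
  \<and> (\<forall>lam::real. 0 < lam \<and> lam < 1 \<longrightarrow>
       (\<forall>L1 \<in> QBA_class \<Sigma> lam. \<forall>L2 \<in> QBA_class \<Sigma> lam.
          \<exists>L :: nat \<Rightarrow> (nat \<Rightarrow> 'a) set. (\<forall>k. L k \<in> QBA_class \<Sigma> lam) \<and> set_lim_is L (L1 \<union> L2)))
  \<and> (\<forall>lam::real. 0 < lam \<and> lam < 1 \<longrightarrow>
       (\<exists>(\<Gamma> :: nat set) (L :: nat \<Rightarrow> (nat \<Rightarrow> nat) set) X. finite \<Gamma> \<and>
          (\<forall>k. L k \<in> QBA_class \<Gamma> lam) \<and> set_lim_is L X \<and> X \<notin> QBA_class \<Gamma> lam))
  \<and> (\<forall>lam::real. 0 \<le> lam \<and> lam < 1 \<longrightarrow>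
       (\<exists>(\<Gamma> :: nat set) L. finite \<Gamma> \<and> L \<in> QBA_class \<Gamma> lam \<and>
          omega_words \<Gamma> - L \<notin> QBA_class \<Gamma> lam))
  \<and> (\<forall>lam::real. 0 \<le> lam \<and> lam < 1 \<longrightarrow>
       (\<exists>(\<Gamma> :: nat set) L1 L2. finite \<Gamma> \<and> L1 \<in> QBA_class \<Gamma> lam \<and> L2 \<in> QBA_class \<Gamma> lam \<and>
          L1 \<inter> L2 \<notin> QBA_class \<Gamma> lam))"
proof (intro conjI)
  show "\<forall>L1 \<in> QBA_class \<Sigma> 0. \<forall>L2 \<in> QBA_class \<Sigma> 0. L1 \<union> L2 \<in> QBA_class \<Sigma> 0"
    by (rule part1[OF assms])
qed (rule conj2 conj3 conj4 conj5)+

end
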